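(* Every ternary cubic form of Waring rank five (equivalently, whose zero locus is a smooth conic together with a line tangent to it) has an apolar star configuration $\mathbb{X}(4)$.
   Context: Let $S=\mathbb{C}[x_0,x_1,x_2]$ and $T=\mathbb{C}[y_0,y_1,y_2]$, where $T$ acts on $S$ by differentiation, $y_j=\partial/\partial x_j$. The Waring rank of a form $F$ of degree $d$ is the minimal $s$ such that $F=L_1^d+\dots+L_s^d$ with $L_i\in S_1$. For a form $F\in S$, $F^\perp=\{\partial\in T:\partial F=0\}$. A finite set of points $\mathbb{X}\subset\mathbb{P}^2=\mathbb{P}(S_1)$ with defining ideal $I(\mathbb{X})\subseteq T$ is apolar to $F$ if $I(\mathbb{X})\subseteq F^\perp$. A star configuration $\mathbb{X}(4)\subset\mathbb{P}^2$: take $4$ linear forms $l_1,\dots,l_4\in T_1$ such that any $3$ of them are linearly independent; $\mathbb{X}(4)$ is the set of $6$ pairwise intersection points of the lines $\{l_i=0\}$. *)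

theory Defs
  imports Complex_Main
begin

text \<open>Polynomials in three variables are encoded by their coefficient functions on
exponent triples (e0,e1,e2). An element F of S = C[x0,x1,x2] has coefficient F e at
the monomial x0^e0 x1^e1 x2^e2; an element G of T = C[y0,y1,y2] likewise.\<close>

type_synonym mono = "nat \<times> nat \<times> nat"
type_synonym vec3 = "complex \<times> complex \<times> complex"

fun mdeg :: "mono \<Rightarrow> nat" where
  "mdeg (a, b, c) = a + b + c"

fun mpow :: "vec3 \<Rightarrow> mono \<Rightarrow> complex" where
  "mpow (p0, p1, p2) (a, b, c) = p0 ^ a * p1 ^ b * p2 ^ c"

definition supp :: "(mono \<Rightarrow> complex) \<Rightarrow> mono set" where
  "supp P = {e. P e \<noteq> 0}"

definition is_poly :: "(mono \<Rightarrow> complex) \<Rightarrow> bool" where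
  "is_poly P \<longleftrightarrow> finite (supp P)"

definition is_form :: "nat \<Rightarrow> (mono \<Rightarrow> complex) \<Rightarrow> bool" where
  "is_form d P \<longleftrightarrow> (\<forall>e. P e \<noteq> 0 \<longrightarrow> mdeg e = d)"

text \<open>Coefficients of L^d for the linear form L = a0 x0 + a1 x1 + a2 x2.\<close>
fun lin_pow :: "vec3 \<Rightarrow> nat \<Rightarrow> mono \<Rightarrow> complex" where
  "lin_pow (a0, a1, a2) d (e0, e1, e2) =
     (if e0 + e1 + e2 = d
      then of_nat (fact d) / (of_nat (fact e0) * of_nat (fact e1) * of_nat (fact e2))
           * a0 ^ e0 * a1 ^ e1 * a2 ^ e2
      else 0)"

definition waring_rank :: "nat \<Rightarrow> (mono \<Rightarrow> complex) \<Rightarrow> nat" where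
  "waring_rank d F = (LEAST s. \<exists>L :: nat \<Rightarrow> vec3. F = (\<lambda>e. \<Sum>i<s. lin_pow (L i) d e))"

text \<open>Falling factorial factor: y_j^b applied to x_j^(b+c) gives (b+c)!/c! x_j^c.\<close>
fun dfac :: "mono \<Rightarrow> mono \<Rightarrow> complex" where
  "dfac (b0, b1, b2) (c0, c1, c2) =
     of_nat (fact (b0 + c0)) / of_nat (fact c0) *
     (of_nat (fact (b1 + c1)) / of_nat (fact c1)) *
     (of_nat (fact (b2 + c2)) / of_nat (fact c2))"

fun madd :: "mono \<Rightarrow> mono \<Rightarrow> mono" where
  "madd (b0, b1, b2) (c0, c1, c2) = (b0 + c0, b1 + c1, b2 + c2)"

text \<open>Action of G in T on F in S by differentiation (y_j = d/dx_j).\<close>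
definition diff_act :: "(mono \<Rightarrow> complex) \<Rightarrow> (mono \<Rightarrow> complex) \<Rightarrow> (mono \<Rightarrow> complex)" where
  "diff_act G F = (\<lambda>c. \<Sum>b\<in>supp G. G b * F (madd b c) * dfac b c)"

definition perp :: "(mono \<Rightarrow> complex) \<Rightarrow> (mono \<Rightarrow> complex) set" where
  "perp F = {G. is_poly G \<and> diff_act G F = (\<lambda>_. 0)}"

text \<open>Homogeneous ideal in T of a set of points of P^2 = P(S_1), the points being given
by (all) their nonzero representatives X \<subseteq> C^3: a polynomial lies in I(X) iff each
of its homogeneous components vanishes at every representative.\<close>
definition ideal_of :: "vec3 set \<Rightarrow> (mono \<Rightarrow> complex) set" where
  "ideal_of X = {G. is_poly G \<and>
      (\<forall>k. \<forall>p\<in>X. (\<Sum>b\<in>{b\<in>supp G. mdeg b = k}. G b * mpow p b) = 0)}"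

definition apolar :: "vec3 set \<Rightarrow> (mono \<Rightarrow> complex) \<Rightarrow> bool" where
  "apolar X F \<longleftrightarrow> ideal_of X \<subseteq> perp F"

fun lin_eval :: "vec3 \<Rightarrow> vec3 \<Rightarrow> complex" where
  "lin_eval (l0, l1, l2) (p0, p1, p2) = l0 * p0 + l1 * p1 + l2 * p2"

fun vsmult :: "complex \<Rightarrow> vec3 \<Rightarrow> vec3" where
  "vsmult a (x, y, z) = (a * x, a * y, a * z)"

fun vadd :: "vec3 \<Rightarrow> vec3 \<Rightarrow> vec3" where
  "vadd (x, y, z) (x', y', z') = (x + x', y + y', z + z')"

definition lin_indep3 :: "vec3 \<Rightarrow> vec3 \<Rightarrow> vec3 \<Rightarrow> bool" where
  "lin_indep3 u v w \<longleftrightarrow>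
     (\<forall>a b c. vadd (vsmult a u) (vadd (vsmult b v) (vsmult c w)) = (0, 0, 0)
        \<longrightarrow> a = 0 \<and> b = 0 \<and> c = 0)"

text \<open>Star configuration X(4) cut out by linear forms l 0, ..., l 3 (any three linearly
independent): the pairwise intersection points of the lines, given by their nonzero
representatives.\<close>
definition star_config :: "(nat \<Rightarrow> vec3) \<Rightarrow> vec3 set" where
  "star_config l = {p. p \<noteq> (0, 0, 0) \<and>
      (\<exists>i<4. \<exists>j<4. i \<noteq> j \<and> lin_eval (l i) p = 0 \<and> lin_eval (l j) p = 0)}"

definition star4_ok :: "(nat \<Rightarrow> vec3) \<Rightarrow> bool" where
  "star4_ok l \<longleftrightarrow> (\<forall>i<4. \<forall>j<4. \<forall>k<4. i \<noteq> j \<and> j \<noteq> k \<and> i \<noteq> k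
                       \<longrightarrow> lin_indep3 (l i) (l j) (l k))"

end

theory Submission
  imports Defs "HOL-Computational_Algebra.Polynomial"
begin

lemma cube_root_ex: "\<exists>z::complex. z^3 = c"
proof -
  have "(rcis (root 3 (cmod c)) (Arg c / 3))^3 = c"
    by (simp add: DeMoivre2 real_root_pow_pos2 rcis_cmod_Arg del: real_root_pow_pos)
  then show ?thesis by blast
qed

definition M3 :: "mono set" where
  "M3 = {(3,0,0),(0,3,0),(0,0,3),(2,1,0),(2,0,1),(1,2,0),(0,2,1),(1,0,2),(0,1,2),(1,1,1)}"

lemma M3_mem: "a + b + c = (3::nat) \<Longrightarrow> (a,b,c) \<in> M3"
proof -
  assume h: "a + b + c = 3"
  have "a < 4" "b < 4" using h by auto
  then have "a \<in> {0,1,2,3}" "b \<in> {0,1,2,3}" by (auto simp: numeral_eq_Suc less_Suc_eq)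
  then show ?thesis using h unfolding M3_def by (elim insertE; simp)+
qed

lemma M3_deg: "e \<in> M3 \<Longrightarrow> mdeg e = 3"
  unfolding M3_def by (elim insertE; simp)+

lemma M3_eq: "{e. mdeg e = 3} = M3"
proof (rule set_eqI)
  fix e :: mono
  obtain a b c where e: "e = (a,b,c)" by (cases e) auto
  show "e \<in> {e. mdeg e = 3} \<longleftrightarrow> e \<in> M3"
    using M3_mem[of a b c] M3_deg[of e] e by auto
qed

lemma finite_M3[simp]: "finite M3" unfolding M3_def by simp

lemma sum_M3: "(\<Sum>e\<in>M3. h e) = h (3,0,0) + h (0,3,0) + h (0,0,3) + h (2,1,0) + h (2,0,1)
   + h (1,2,0) + h (0,2,1) + h (1,0,2) + h (0,1,2) + h (1,1,1)"
  unfolding M3_def by (simp add: add.assoc)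

definition cval :: "(mono \<Rightarrow> complex) \<Rightarrow> vec3 \<Rightarrow> complex" where
  "cval h u = (\<Sum>e\<in>M3. h e * mpow u e)"

lemma cube_expand: "(lin_eval a u)^3 = cval (lin_pow a 3) u"
proof -
  obtain a0 a1 a2 where a: "a = (a0,a1,a2)" by (cases a) auto
  obtain u0 u1 u2 where u: "u = (u0,u1,u2)" by (cases u) auto
  show ?thesis unfolding a u cval_def sum_M3
    by (simp add: fact_numeral) algebra
qed
lemma interp:
  assumes "\<forall>u. cval h u = 0"
  shows "\<forall>e\<in>M3. h e = 0"
proof -
  have v: "\<And>x y z. cval h (x,y,z) = 0" using assms by blast
  have e1: "h (3,0,0) = 0" using v[of 1 0 0] by (simp add: cval_def sum_M3)
  have e2: "h (0,3,0) = 0" using v[of 0 1 0] by (simp add: cval_def sum_M3)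
  have e3: "h (0,0,3) = 0" using v[of 0 0 1] by (simp add: cval_def sum_M3)
  have a1: "h (2,1,0) + h (1,2,0) = 0" using v[of 1 1 0] e1 e2 e3 by (simp add: cval_def sum_M3)
  have a2: "- h (2,1,0) + h (1,2,0) = 0" using v[of 1 "-1" 0] e1 e2 e3 by (simp add: cval_def sum_M3)
  have b1: "h (2,0,1) + h (1,0,2) = 0" using v[of 1 0 1] e1 e2 e3 by (simp add: cval_def sum_M3)
  have b2: "- h (2,0,1) + h (1,0,2) = 0" using v[of 1 0 "-1"] e1 e2 e3 by (simp add: cval_def sum_M3)
  have c1: "h (0,2,1) + h (0,1,2) = 0" using v[of 0 1 1] e1 e2 e3 by (simp add: cval_def sum_M3)
  have c2: "- h (0,2,1) + h (0,1,2) = 0" using v[of 0 1 "-1"] e1 e2 e3 by (simp add: cval_def sum_M3)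
  have f1: "h (2,1,0) = 0" "h (1,2,0) = 0" using a1 a2 by (auto simp: algebra_simps) 
  have f2: "h (2,0,1) = 0" "h (1,0,2) = 0" using b1 b2 by (auto simp: algebra_simps) 
  have f3: "h (0,2,1) = 0" "h (0,1,2) = 0" using c1 c2 by (auto simp: algebra_simps) 
  have f4: "h (1,1,1) = 0" using v[of 1 1 1] e1 e2 e3 f1 f2 f3 by (simp add: cval_def sum_M3)
  show ?thesis using e1 e2 e3 f1 f2 f3 f4 unfolding M3_def by auto
qed


lemma lin_pow_deg: "mdeg e \<noteq> d \<Longrightarrow> lin_pow a d e = 0"
  by (cases a; cases e) auto

lemma cubes_coeff_eq:
  assumes fin: "finite I" "finite J"
    and eq: "\<forall>u. (\<Sum>i\<in>I. c i * (lin_eval (A i) u)^3) = (\<Sum>j\<in>J. d j * (lin_eval (B j) u)^3)"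
  shows "(\<Sum>i\<in>I. c i * lin_pow (A i) 3 e) = (\<Sum>j\<in>J. d j * lin_pow (B j) 3 e)"
proof (cases "mdeg e = 3")
  case False then show ?thesis by (simp add: lin_pow_deg)
next
  case True
  define h where "h e' = (\<Sum>i\<in>I. c i * lin_pow (A i) 3 e') - (\<Sum>j\<in>J. d j * lin_pow (B j) 3 e')" for e'
  have "cval h u = 0" for u
  proof -
    have "cval h u = (\<Sum>e\<in>M3. \<Sum>i\<in>I. c i * lin_pow (A i) 3 e * mpow u e)
        - (\<Sum>e\<in>M3. \<Sum>j\<in>J. d j * lin_pow (B j) 3 e * mpow u e)"
      unfolding cval_def h_def by (simp add: left_diff_distrib sum_subtractf sum_distrib_right)
    also have "\<dots> = (\<Sum>i\<in>I. c i * cval (lin_pow (A i) 3) u) - (\<Sum>j\<in>J. d j * cval (lin_pow (B j) 3) u)"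
      unfolding cval_def by (simp add: sum.swap[of _ M3] sum_distrib_left mult.assoc)
    also have "\<dots> = 0"
    proof -
      have "(\<Sum>i\<in>I. c i * (lin_eval (A i) u)^3) = (\<Sum>j\<in>J. d j * (lin_eval (B j) u)^3)"
        using eq by blast
      then show ?thesis unfolding cube_expand by simp
    qed
    finally show ?thesis .
  qed
  then have "h e = 0" using interp[of h] True M3_eq by auto
  then show ?thesis by (simp add: h_def)
qed

lemma diff_act_sum:
  "diff_act G (\<lambda>e. \<Sum>j\<in>J. d j * P j e) = (\<lambda>c. \<Sum>j\<in>J. d j * diff_act G (P j) c)"
  unfolding diff_act_def
  by (rule ext) (simp add: sum_distrib_left sum_distrib_right sum.swap[of _ "supp G"] mult.assoc mult.left_commute)

lemma cube_dfac:
  "lin_pow (p0,p1,p2) 3 (madd (b0,b1,b2) (c0,c1,c2)) * dfac (b0,b1,b2) (c0,c1,c2) =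
   (if (b0+b1+b2) + (c0+c1+c2) = 3 then
      6 / (of_nat (fact c0) * of_nat (fact c1) * of_nat (fact c2)) * (p0^c0*p1^c1*p2^c2)
      * (p0^b0 * p1^b1 * p2^b2) else 0)"
proof (cases "(b0+b1+b2) + (c0+c1+c2) = 3")
  case True
  have "(b0+c0) + (b1+c1) + (b2+c2) = 3" using True by simp
  then show ?thesis using True
    by (simp add: fact_numeral power_add field_simps)
next
  case False
  then have "(b0+c0) + (b1+c1) + (b2+c2) \<noteq> 3" by simp
  then show ?thesis using False by simp
qed

lemma diff_act_cube:
  assumes G: "G \<in> ideal_of X" and p: "p \<in> X"
  shows "diff_act G (lin_pow p 3) c = 0"
proof -
  obtain p0 p1 p2 where pe: "p = (p0,p1,p2)" by (cases p) auto
  obtain c0 c1 c2 where ce: "c = (c0,c1,c2)" by (cases c) auto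
  have fin: "finite (supp G)" using G unfolding ideal_of_def is_poly_def by auto
  have van: "(\<Sum>b\<in>{b\<in>supp G. mdeg b = k}. G b * mpow p b) = 0" for k
    using G p unfolding ideal_of_def by auto
  define K where "K = 6 / (of_nat (fact c0) * of_nat (fact c1) * of_nat (fact c2)) * (p0^c0*p1^c1*p2^c2)"
  have tm: "G b * lin_pow p 3 (madd b c) * dfac b c =
      (if mdeg b = 3 - mdeg c \<and> mdeg c \<le> 3 then K * (G b * mpow p b) else 0)" for b
  proof -
    obtain b0 b1 b2 where be: "b = (b0,b1,b2)" by (cases b) auto
    have "(b0+b1+b2) + (c0+c1+c2) = 3 \<longleftrightarrow> (b0+b1+b2 = 3 - (c0+c1+c2) \<and> c0+c1+c2 \<le> 3)" by arith
    then show ?thesis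
      unfolding be pe ce using cube_dfac[of p0 p1 p2 b0 b1 b2 c0 c1 c2]
      by (simp add: K_def mult.assoc mult.left_commute mult.commute)
  qed
  have "diff_act G (lin_pow p 3) c =
      (\<Sum>b\<in>supp G. if mdeg b = 3 - mdeg c \<and> mdeg c \<le> 3 then K * (G b * mpow p b) else 0)"
    unfolding diff_act_def using tm by simp
  also have "\<dots> = (\<Sum>b\<in>{b\<in>supp G. mdeg b = 3 - mdeg c \<and> mdeg c \<le> 3}. K * (G b * mpow p b))"
    using fin by (simp add: sum.inter_filter)
  also have "\<dots> = 0"
  proof (cases "mdeg c \<le> 3")
    case True
    then show ?thesis using van[of "3 - mdeg c"] by (simp add: sum_distrib_left[symmetric])
  next
    case False then show ?thesis by simp
  qed
  finally show ?thesis .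
qed

lemma apolar_of_span:
  assumes fin: "finite J" and mem: "\<forall>j\<in>J. B j \<in> X"
    and F: "F = (\<lambda>e. \<Sum>j\<in>J. d j * lin_pow (B j) 3 e)"
  shows "apolar X F"
  unfolding apolar_def
proof
  fix G assume G: "G \<in> ideal_of X"
  have "diff_act G F = (\<lambda>c. \<Sum>j\<in>J. d j * diff_act G (lin_pow (B j) 3) c)"
    unfolding F by (rule diff_act_sum)
  also have "\<dots> = (\<lambda>_. 0)" using diff_act_cube[OF G] mem by simp
  finally show "G \<in> perp F" using G unfolding perp_def ideal_of_def by auto
qed

lemma cval_sum: "cval (\<lambda>e. \<Sum>j\<in>J. d j * P j e) u = (\<Sum>j\<in>J. d j * cval (P j) u)"
  unfolding cval_def by (simp add: sum_distrib_right sum_distrib_left sum.swap[of _ M3] mult.assoc)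

lemma cval_cubes: "cval (\<lambda>e. \<Sum>j\<in>J. d j * lin_pow (B j) 3 e) u = (\<Sum>j\<in>J. d j * (lin_eval (B j) u)^3)"
  by (simp add: cval_sum cube_expand)

lemma form_coeff_eq:
  assumes form: "is_form 3 H"
    and eq: "\<forall>u. cval H u = (\<Sum>j\<in>J. d j * (lin_eval (B j) u)^3)"
  shows "H = (\<lambda>e. \<Sum>j\<in>J. d j * lin_pow (B j) 3 e)"
proof
  fix e
  show "H e = (\<Sum>j\<in>J. d j * lin_pow (B j) 3 e)"
  proof (cases "mdeg e = 3")
    case False
    have "H e = 0" using form False unfolding is_form_def by blast
    then show ?thesis using False by (simp add: lin_pow_deg)
  next
    case True
    define h where "h e' = H e' - (\<Sum>j\<in>J. d j * lin_pow (B j) 3 e')" for e'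
    have "cval h u = 0" for u
    proof -
      have "cval h u = cval H u - cval (\<lambda>e. \<Sum>j\<in>J. d j * lin_pow (B j) 3 e) u"
        unfolding cval_def h_def by (simp add: left_diff_distrib sum_subtractf)
      also have "\<dots> = 0" using eq[rule_format, of u] by (simp add: cval_cubes)
      finally show ?thesis .
    qed
    then have "h e = 0" using interp[of h] True M3_eq by auto
    then show ?thesis by (simp add: h_def)
  qed
qed

lemma lin_pow_smult: "lin_pow (vsmult z p) 3 e = z^3 * lin_pow p 3 e"
proof -
  obtain p0 p1 p2 where pe: "p = (p0,p1,p2)" by (cases p) auto
  obtain e0 e1 e2 where ee: "e = (e0,e1,e2)" by (cases e) auto
  show ?thesis
  proof (cases "e0+e1+e2 = 3")
    case True
    have "(z*p0)^e0 * (z*p1)^e1 * (z*p2)^e2 = z^(e0+e1+e2) * (p0^e0*p1^e1*p2^e2)"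
      by (simp add: power_mult_distrib power_add)
    then show ?thesis unfolding pe ee using True by (simp add: mult.assoc mult.left_commute)
  next
    case False then show ?thesis unfolding pe ee by simp
  qed
qed

lemma absorb_coeffs:
  "\<exists>L. (\<lambda>e. \<Sum>j\<in>J. d j * lin_pow (B j) 3 e) = (\<lambda>e. \<Sum>j\<in>J. lin_pow (L j) 3 e)"
proof -
  have "\<forall>j. \<exists>z::complex. z^3 = d j" using cube_root_ex by blast
  then obtain z where z: "\<forall>j. z j ^ 3 = d j" by metis
  show ?thesis
    by (rule exI[of _ "\<lambda>j. vsmult (z j) (B j)"]) (simp add: lin_pow_smult z)
qed

definition basisP :: "nat \<Rightarrow> vec3" where
  "basisP j = [(1,0,0),(0,1,0),(0,0,1),(1,1,0),(1,-1,0),(1,0,1),(1,0,-1),(0,1,1),(0,1,-1),(1,1,1)] ! j"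

definition basisC :: "(mono \<Rightarrow> complex) \<Rightarrow> nat \<Rightarrow> complex" where
  "basisC F j = (let
     a210 = F (2,1,0) - F (1,1,1)/2; a120 = F (1,2,0) - F (1,1,1)/2;
     a201 = F (2,0,1) - F (1,1,1)/2; a102 = F (1,0,2) - F (1,1,1)/2;
     a021 = F (0,2,1) - F (1,1,1)/2; a012 = F (0,1,2) - F (1,1,1)/2 in
   [F (3,0,0) - F (1,1,1)/6 - a120/3 - a102/3,
    F (0,3,0) - F (1,1,1)/6 - a210/3 - a012/3,
    F (0,0,3) - F (1,1,1)/6 - a201/3 - a021/3,
    (a210 + a120)/6, (a120 - a210)/6,
    (a201 + a102)/6, (a102 - a201)/6,
    (a021 + a012)/6, (a012 - a021)/6,
    F (1,1,1)/6] ! j)"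

lemma basis_fun: "cval F u = (\<Sum>j<10. basisC F j * (lin_eval (basisP j) u)^3)"
proof -
  obtain x y z where ue: "u = (x,y,z)" by (cases u) auto
  show ?thesis unfolding ue cval_def sum_M3
    by (simp add: basisC_def basisP_def Let_def numeral_eq_Suc) (simp add: field_simps; algebra)
qed

lemma form_is_sum_cubes:
  assumes "is_form 3 F"
  shows "\<exists>L. F = (\<lambda>e. \<Sum>j<(10::nat). lin_pow (L j) 3 e)"
proof -
  have "F = (\<lambda>e. \<Sum>j<10. basisC F j * lin_pow (basisP j) 3 e)"
    using form_coeff_eq[OF assms] basis_fun by blast
  then show ?thesis using absorb_coeffs[where d="basisC F" and J="{..<10}" and B=basisP] by simp
qed

definition hasdec :: "(mono \<Rightarrow> complex) \<Rightarrow> nat \<Rightarrow> bool" where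
  "hasdec F s \<longleftrightarrow> (\<exists>L :: nat \<Rightarrow> vec3. F = (\<lambda>e. \<Sum>i<s. lin_pow (L i) 3 e))"

lemma rank5_facts:
  assumes form: "is_form 3 F" and rk: "waring_rank 3 F = 5"
  shows "hasdec F 5" and "\<not> hasdec F 4"
proof -
  have ex: "hasdec F 10" using form_is_sum_cubes[OF form] unfolding hasdec_def by blast
  have wr: "waring_rank 3 F = (LEAST s. hasdec F s)"
    unfolding waring_rank_def hasdec_def by simp
  show "hasdec F 5" using LeastI[of "hasdec F" 10, OF ex] rk wr by simp
  show "\<not> hasdec F 4"
  proof
    assume "hasdec F 4"
    then have "(LEAST s. hasdec F s) \<le> 4" by (rule Least_le)
    then show False using rk wr by simp
  qed
qed

lemma hasdec_of_fun:
  assumes form: "is_form 3 F"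
    and eq: "\<forall>u. cval F u = (\<Sum>j<s. c j * (lin_eval (M j) u)^3)"
  shows "hasdec F s"
proof -
  have "F = (\<lambda>e. \<Sum>j<s. c j * lin_pow (M j) 3 e)" using form_coeff_eq[OF form] eq by blast
  then show ?thesis unfolding hasdec_def using absorb_coeffs[where d=c and J="{..<s}" and B=M] by auto
qed

lemma cval_dec: "F = (\<lambda>e. \<Sum>i<s. lin_pow (L i) 3 e) \<Longrightarrow> cval F u = (\<Sum>i<s. (lin_eval (L i) u)^3)"
  using cval_cubes[where d="\<lambda>_. 1" and J="{..<s}" and B=L] by simp

fun cross :: "vec3 \<Rightarrow> vec3 \<Rightarrow> vec3" where
  "cross (a0,a1,a2) (b0,b1,b2) = (a1*b2 - a2*b1, a2*b0 - a0*b2, a0*b1 - a1*b0)"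

definition det3 :: "vec3 \<Rightarrow> vec3 \<Rightarrow> vec3 \<Rightarrow> complex" where
  "det3 a b c = lin_eval a (cross b c)"

definition TL :: "(nat \<Rightarrow> vec3) \<Rightarrow> vec3 \<Rightarrow> vec3 \<Rightarrow> vec3 \<Rightarrow> complex" where
  "TL L a b c = (\<Sum>i<5. lin_eval (L i) a * lin_eval (L i) b * lin_eval (L i) c)"

definition vsub :: "vec3 \<Rightarrow> vec3 \<Rightarrow> vec3" where
  "vsub a b = vadd a (vsmult (-1) b)"

lemma indep_of_det: assumes "det3 u v w \<noteq> 0" shows "lin_indep3 u v w"
  unfolding lin_indep3_def
proof (intro allI impI)
  fix a b c
  assume h: "vadd (vsmult a u) (vadd (vsmult b v) (vsmult c w)) = (0, 0, 0)"
  obtain u0 u1 u2 where ue: "u = (u0,u1,u2)" by (cases u) auto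
  obtain v0 v1 v2 where ve: "v = (v0,v1,v2)" by (cases v) auto
  obtain w0 w1 w2 where we: "w = (w0,w1,w2)" by (cases w) auto
  have e: "a*u0 + b*v0 + c*w0 = 0" "a*u1 + b*v1 + c*w1 = 0" "a*u2 + b*v2 + c*w2 = 0"
    using h unfolding ue ve we by (auto simp: add.assoc)
  have d: "det3 u v w = u0*(v1*w2 - v2*w1) + u1*(v2*w0 - v0*w2) + u2*(v0*w1 - v1*w0)"
    unfolding ue ve we det3_def by simp
  have "a * det3 u v w = 0" "b * det3 u v w = 0" "c * det3 u v w = 0"
    unfolding d using e by algebra+
  then show "a = 0 \<and> b = 0 \<and> c = 0" using assms by auto
qed

lemma decomp_dot:
  "lin_eval p u * det3 v0 v1 v2 = lin_eval (cross v1 v2) u * lin_eval p v0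
     + lin_eval (cross v2 v0) u * lin_eval p v1 + lin_eval (cross v0 v1) u * lin_eval p v2"
proof -
  obtain p0 p1 p2 where pe: "p = (p0,p1,p2)" by (cases p) auto
  obtain u0 u1 u2 where ue: "u = (u0,u1,u2)" by (cases u) auto
  obtain a0 a1 a2 where ae: "v0 = (a0,a1,a2)" by (cases v0) auto
  obtain b0 b1 b2 where be: "v1 = (b0,b1,b2)" by (cases v1) auto
  obtain c0 c1 c2 where ce: "v2 = (c0,c1,c2)" by (cases v2) auto
  show ?thesis unfolding pe ue ae be ce by (simp add: det3_def) algebra
qed

lemma cube3_expand:
  "(b0*x + b1*y + b2*z)^3 = b0^3 * (x*x*x) + b1^3 * (y*y*y) + b2^3 * (z*z*z)
    + 3*(b0^2*b1) * (x*x*y) + 3*(b0*b1^2) * (x*y*y) + 3*(b0^2*b2) * (x*x*z)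
    + 3*(b0*b2^2) * (x*z*z) + 3*(b1^2*b2) * (y*y*z) + 3*(b1*b2^2) * (y*z*z)
    + 6*(b0*b1*b2) * (x*y*z)" for b0 b1 b2 x y z :: complex
  by algebra

lemma TL_expand:
  fixes b0 b1 b2 :: complex
  assumes "\<forall>i. lin_eval (L i) u = b0 * lin_eval (L i) v0 + b1 * lin_eval (L i) v1 + b2 * lin_eval (L i) v2"
  shows "(\<Sum>i<5. (lin_eval (L i) u)^3) =
      b0^3 * TL L v0 v0 v0 + b1^3 * TL L v1 v1 v1 + b2^3 * TL L v2 v2 v2
    + 3*(b0^2*b1) * TL L v0 v0 v1 + 3*(b0*b1^2) * TL L v0 v1 v1 + 3*(b0^2*b2) * TL L v0 v0 v2
    + 3*(b0*b2^2) * TL L v0 v2 v2 + 3*(b1^2*b2) * TL L v1 v1 v2 + 3*(b1*b2^2) * TL L v1 v2 v2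
    + 6*(b0*b1*b2) * TL L v0 v1 v2"
proof -
  have "(\<Sum>i<5. (lin_eval (L i) u)^3) = (\<Sum>i<5. (b0 * lin_eval (L i) v0 + b1 * lin_eval (L i) v1 + b2 * lin_eval (L i) v2)^3)"
    using assms by simp
  then show ?thesis unfolding TL_def cube3_expand
    by (simp only: sum.distrib sum_distrib_left[symmetric])
qed

definition lsel :: "vec3 \<Rightarrow> vec3 \<Rightarrow> vec3 \<Rightarrow> nat \<Rightarrow> vec3" where
  "lsel v0 v1 v2 i = (if i = 0 then v0 else if i = 1 then v1 else if i = 2 then v2 else vadd v0 (vadd v1 v2))"

definition nzd :: "vec3 \<Rightarrow> vec3 \<Rightarrow> vec3 \<Rightarrow> bool" where
  "nzd x y z \<longleftrightarrow> det3 x y z \<noteq> 0"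

lemma det3_swap: "det3 y x z = - det3 x y z"
proof -
  obtain a0 a1 a2 where ae: "x = (a0,a1,a2)" by (cases x) auto
  obtain b0 b1 b2 where be: "y = (b0,b1,b2)" by (cases y) auto
  obtain c0 c1 c2 where ce: "z = (c0,c1,c2)" by (cases z) auto
  show ?thesis unfolding ae be ce det3_def by simp algebra
qed

lemma det3_cyc: "det3 y z x = det3 x y z"
proof -
  obtain a0 a1 a2 where ae: "x = (a0,a1,a2)" by (cases x) auto
  obtain b0 b1 b2 where be: "y = (b0,b1,b2)" by (cases y) auto
  obtain c0 c1 c2 where ce: "z = (c0,c1,c2)" by (cases z) auto
  show ?thesis unfolding ae be ce det3_def by simp algebra
qed

lemma nzd_swap: "nzd x y z \<Longrightarrow> nzd y x z" unfolding nzd_def using det3_swap[where x=x and y=y and z=z] by simp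
lemma nzd_cyc: "nzd x y z \<Longrightarrow> nzd y z x" unfolding nzd_def using det3_cyc[where x=x and y=y and z=z] by simp

lemma det3_base:
  shows "det3 v0 v1 (vadd v0 (vadd v1 v2)) = det3 v0 v1 v2"
    "det3 v0 v2 (vadd v0 (vadd v1 v2)) = - det3 v0 v1 v2"
    "det3 v1 v2 (vadd v0 (vadd v1 v2)) = det3 v0 v1 v2"
proof -
  obtain a0 a1 a2 where ae: "v0 = (a0,a1,a2)" by (cases v0) auto
  obtain b0 b1 b2 where be: "v1 = (b0,b1,b2)" by (cases v1) auto
  obtain c0 c1 c2 where ce: "v2 = (c0,c1,c2)" by (cases v2) auto
  show "det3 v0 v1 (vadd v0 (vadd v1 v2)) = det3 v0 v1 v2"
    "det3 v0 v2 (vadd v0 (vadd v1 v2)) = - det3 v0 v1 v2"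
    "det3 v1 v2 (vadd v0 (vadd v1 v2)) = det3 v0 v1 v2"
    unfolding ae be ce det3_def by (simp; algebra)+
qed

lemma star4_ok_lsel:
  assumes D: "det3 v0 v1 v2 \<noteq> 0"
  shows "star4_ok (lsel v0 v1 v2)"
  unfolding star4_ok_def
proof (intro allI impI)
  fix i j k :: nat
  assume h0: "i < 4" "j < 4" "k < 4" and h: "i \<noteq> j \<and> j \<noteq> k \<and> i \<noteq> k"
  have I: "i = 0 \<or> i = 1 \<or> i = 2 \<or> i = 3" "j = 0 \<or> j = 1 \<or> j = 2 \<or> j = 3"
    "k = 0 \<or> k = 1 \<or> k = 2 \<or> k = 3" using h0 by auto
  have B: "nzd v0 v1 v2" "nzd v0 v1 (vadd v0 (vadd v1 v2))" "nzd v0 v2 (vadd v0 (vadd v1 v2))"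
      "nzd v1 v2 (vadd v0 (vadd v1 v2))"
    using D unfolding nzd_def det3_base by auto
  from I have "nzd (lsel v0 v1 v2 i) (lsel v0 v1 v2 j) (lsel v0 v1 v2 k)"
    using h apply (elim disjE) apply (simp_all add: lsel_def B(1) nzd_cyc[OF B(1)] nzd_cyc[OF nzd_cyc[OF B(1)]] nzd_swap[OF B(1)] nzd_cyc[OF nzd_swap[OF B(1)]] nzd_cyc[OF nzd_cyc[OF nzd_swap[OF B(1)]]] B(2) nzd_cyc[OF B(2)] nzd_cyc[OF nzd_cyc[OF B(2)]] nzd_swap[OF B(2)] nzd_cyc[OF nzd_swap[OF B(2)]] nzd_cyc[OF nzd_cyc[OF nzd_swap[OF B(2)]]] B(3) nzd_cyc[OF B(3)] nzd_cyc[OF nzd_cyc[OF B(3)]] nzd_swap[OF B(3)] nzd_cyc[OF nzd_swap[OF B(3)]] nzd_cyc[OF nzd_cyc[OF nzd_swap[OF B(3)]]] B(4) nzd_cyc[OF B(4)] nzd_cyc[OF nzd_cyc[OF B(4)]] nzd_swap[OF B(4)] nzd_cyc[OF nzd_swap[OF B(4)]] nzd_cyc[OF nzd_cyc[OF nzd_swap[OF B(4)]]]) done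
  then show "lin_indep3 (lsel v0 v1 v2 i) (lsel v0 v1 v2 j) (lsel v0 v1 v2 k)"
    unfolding nzd_def by (rule indep_of_det)
qed

lemma final_alg:
  fixes t000 t111 t222 t001 t011 t002 t022 t112 t122 t012 b0 b1 b2 D :: complex
  assumes D: "D \<noteq> 0" and h: "t012 = 0" "t001 + t011 = 0" "t002 + t022 = 0" "t112 + t122 = 0"
  shows "b0^3 * t000 + b1^3 * t111 + b2^3 * t222 + 3*(b0^2*b1)*t001 + 3*(b0*b1^2)*t011
    + 3*(b0^2*b2)*t002 + 3*(b0*b2^2)*t022 + 3*(b1^2*b2)*t112 + 3*(b1*b2^2)*t122 + 6*(b0*b1*b2)*t012
   = (t000+t001+t002)/D^3 * (D*b0)^3 + (t111 - t001 + t112)/D^3 * (D*b1)^3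
    + (t222 - t002 - t112)/D^3 * (D*b2)^3 + (-t001)/D^3 * (D*b0 - D*b1)^3
    + (-t002)/D^3 * (D*b0 - D*b2)^3 + (-t112)/D^3 * (D*b1 - D*b2)^3"
proof -
  have e: "t011 = - t001" "t022 = - t002" "t122 = - t112" using h by (simp_all add: eq_neg_iff_add_eq_0 add.commute)
  have p: "\<And>x c. c / D^3 * (D * x)^3 = c * x^3" using D by (simp add: power_mult_distrib)
  have p2: "\<And>x y c. c / D^3 * (D * x - D * y)^3 = c * (x - y)^3"
    using D by (simp add: right_diff_distrib[symmetric] power_mult_distrib)
  show ?thesis unfolding p p2 e h(1) by algebra
qed

lemma dot_vadd_l: "lin_eval (vadd a b) x = lin_eval a x + lin_eval b x"
  by (cases a; cases b; cases x) (simp add: algebra_simps)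
lemma dot_vsub_l: "lin_eval (vsub a b) x = lin_eval a x - lin_eval b x"
  unfolding vsub_def by (cases a; cases b; cases x) (simp add: algebra_simps)
lemma dot_vsub_r: "lin_eval x (vsub a b) = lin_eval x a - lin_eval x b"
  unfolding vsub_def by (cases a; cases b; cases x) (simp add: algebra_simps)
lemma dot_zero_r: "lin_eval x (0,0,0) = 0"
  by (cases x) simp

lemma cross_facts:
  shows "lin_eval v1 (cross v1 v2) = 0" "lin_eval v2 (cross v1 v2) = 0" "lin_eval v0 (cross v1 v2) = det3 v0 v1 v2"
    "lin_eval v2 (cross v2 v0) = 0" "lin_eval v0 (cross v2 v0) = 0" "lin_eval v1 (cross v2 v0) = det3 v0 v1 v2"
    "lin_eval v0 (cross v0 v1) = 0" "lin_eval v1 (cross v0 v1) = 0" "lin_eval v2 (cross v0 v1) = det3 v0 v1 v2"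
proof -
  obtain a0 a1 a2 where ae: "v0 = (a0,a1,a2)" by (cases v0) auto
  obtain b0 b1 b2 where be: "v1 = (b0,b1,b2)" by (cases v1) auto
  obtain c0 c1 c2 where ce: "v2 = (c0,c1,c2)" by (cases v2) auto
  show "lin_eval v1 (cross v1 v2) = 0" "lin_eval v2 (cross v1 v2) = 0" "lin_eval v0 (cross v1 v2) = det3 v0 v1 v2"
    "lin_eval v2 (cross v2 v0) = 0" "lin_eval v0 (cross v2 v0) = 0" "lin_eval v1 (cross v2 v0) = det3 v0 v1 v2"
    "lin_eval v0 (cross v0 v1) = 0" "lin_eval v1 (cross v0 v1) = 0" "lin_eval v2 (cross v0 v1) = det3 v0 v1 v2"
    unfolding ae be ce det3_def by (simp; algebra)+
qed

lemma star_mem: "p \<noteq> (0,0,0) \<Longrightarrow> i < 4 \<Longrightarrow> j < 4 \<Longrightarrow> i \<noteq> j \<Longrightarrow> lin_eval (l i) p = 0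
   \<Longrightarrow> lin_eval (l j) p = 0 \<Longrightarrow> p \<in> star_config l"
  unfolding star_config_def by blast

lemma nz_of_dot: "lin_eval a p \<noteq> 0 \<Longrightarrow> p \<noteq> (0,0,0)"
  by (auto simp: dot_zero_r)

lemma good_apolar:
  assumes F: "F = (\<lambda>e. \<Sum>i<5. lin_pow (L i) 3 e)"
    and D: "det3 v0 v1 v2 \<noteq> 0"
    and c1: "TL L v0 v1 v2 = 0" and c2: "TL L v0 v0 v1 + TL L v0 v1 v1 = 0"
    and c3: "TL L v0 v0 v2 + TL L v0 v2 v2 = 0" and c4: "TL L v1 v1 v2 + TL L v1 v2 v2 = 0"
  shows "apolar (star_config (lsel v0 v1 v2)) F"
proof -
  define \<Delta> where "\<Delta> = det3 v0 v1 v2"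
  define w0 where "w0 = cross v1 v2"
  define w1 where "w1 = cross v2 v0"
  define w2 where "w2 = cross v0 v1"
  define q where "q j = [w0, w1, w2, vsub w0 w1, vsub w0 w2, vsub w1 w2] ! j" for j
  define t000 where "t000 = TL L v0 v0 v0"
  define t111 where "t111 = TL L v1 v1 v1"
  define t222 where "t222 = TL L v2 v2 v2"
  define t001 where "t001 = TL L v0 v0 v1"
  define t002 where "t002 = TL L v0 v0 v2"
  define t112 where "t112 = TL L v1 v1 v2"
  define c where "c j = [(t000+t001+t002)/\<Delta>^3, (t111 - t001 + t112)/\<Delta>^3,
      (t222 - t002 - t112)/\<Delta>^3, (-t001)/\<Delta>^3, (-t002)/\<Delta>^3, (-t112)/\<Delta>^3] ! j" for j
  have Dn: "\<Delta> \<noteq> 0" using D by (simp add: \<Delta>_def)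
  have form: "is_form 3 F" unfolding is_form_def F
  proof (intro allI impI)
    fix e assume ne: "(\<Sum>i<5. lin_pow (L i) 3 e) \<noteq> 0"
    show "mdeg e = 3"
    proof (rule ccontr)
      assume "mdeg e \<noteq> 3"
      then have "(\<Sum>i<5. lin_pow (L i) 3 e) = 0" by (simp add: lin_pow_deg)
      then show False using ne by simp
    qed
  qed
  have hfun: "\<forall>u. cval F u = (\<Sum>j<6. c j * (lin_eval (q j) u)^3)"
  proof
    fix u
    define b0 where "b0 = lin_eval w0 u / \<Delta>"
    define b1 where "b1 = lin_eval w1 u / \<Delta>"
    define b2 where "b2 = lin_eval w2 u / \<Delta>"
    have w0u: "lin_eval w0 u = \<Delta> * b0" using Dn by (simp add: b0_def)
    have w1u: "lin_eval w1 u = \<Delta> * b1" using Dn by (simp add: b1_def)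
    have w2u: "lin_eval w2 u = \<Delta> * b2" using Dn by (simp add: b2_def)
    have lin: "\<forall>i. lin_eval (L i) u = b0 * lin_eval (L i) v0 + b1 * lin_eval (L i) v1 + b2 * lin_eval (L i) v2"
    proof
      fix i
      have "lin_eval (L i) u * \<Delta> = (b0 * lin_eval (L i) v0 + b1 * lin_eval (L i) v1 + b2 * lin_eval (L i) v2) * \<Delta>"
        using decomp_dot[of "L i" u v0 v1 v2] unfolding \<Delta>_def[symmetric] w0_def[symmetric] w1_def[symmetric] w2_def[symmetric] w0u w1u w2u
        by (simp add: algebra_simps)
      then show "lin_eval (L i) u = b0 * lin_eval (L i) v0 + b1 * lin_eval (L i) v1 + b2 * lin_eval (L i) v2"
        using Dn by simp
    qed
    have "cval F u = (\<Sum>i<5. (lin_eval (L i) u)^3)" by (rule cval_dec[OF F])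
    also have "\<dots> = b0^3 * TL L v0 v0 v0 + b1^3 * TL L v1 v1 v1 + b2^3 * TL L v2 v2 v2
    + 3*(b0^2*b1) * TL L v0 v0 v1 + 3*(b0*b1^2) * TL L v0 v1 v1 + 3*(b0^2*b2) * TL L v0 v0 v2
    + 3*(b0*b2^2) * TL L v0 v2 v2 + 3*(b1^2*b2) * TL L v1 v1 v2 + 3*(b1*b2^2) * TL L v1 v2 v2
    + 6*(b0*b1*b2) * TL L v0 v1 v2" by (rule TL_expand[OF lin])
    also have "\<dots> = (t000+t001+t002)/\<Delta>^3 * (\<Delta>*b0)^3 + (t111 - t001 + t112)/\<Delta>^3 * (\<Delta>*b1)^3
    + (t222 - t002 - t112)/\<Delta>^3 * (\<Delta>*b2)^3 + (-t001)/\<Delta>^3 * (\<Delta>*b0 - \<Delta>*b1)^3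
    + (-t002)/\<Delta>^3 * (\<Delta>*b0 - \<Delta>*b2)^3 + (-t112)/\<Delta>^3 * (\<Delta>*b1 - \<Delta>*b2)^3"
      unfolding t000_def t111_def t222_def t001_def t002_def t112_def
      by (rule final_alg[OF Dn c1 c2 c3 c4])
    also have "\<dots> = (\<Sum>j<6. c j * (lin_eval (q j) u)^3)"
      by (simp add: c_def q_def numeral_eq_Suc dot_vsub_l w0u w1u w2u)
    finally show "cval F u = (\<Sum>j<6. c j * (lin_eval (q j) u)^3)" .
  qed
  have Fe: "F = (\<lambda>e. \<Sum>j<6. c j * lin_pow (q j) 3 e)" by (rule form_coeff_eq[OF form hfun])
  have v3: "\<And>x. lin_eval (vadd v0 (vadd v1 v2)) x = lin_eval v0 x + lin_eval v1 x + lin_eval v2 x"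
    by (simp add: dot_vadd_l)
  have cf: "lin_eval v1 w0 = 0" "lin_eval v2 w0 = 0" "lin_eval v0 w0 = \<Delta>"
    "lin_eval v2 w1 = 0" "lin_eval v0 w1 = 0" "lin_eval v1 w1 = \<Delta>"
    "lin_eval v0 w2 = 0" "lin_eval v1 w2 = 0" "lin_eval v2 w2 = \<Delta>"
    unfolding w0_def w1_def w2_def \<Delta>_def by (rule cross_facts)+
  have mem: "\<forall>j\<in>{..<6}. q j \<in> star_config (lsel v0 v1 v2)"
  proof
    fix j assume "j \<in> {..<6::nat}"
    then have "j = 0 \<or> j = 1 \<or> j = 2 \<or> j = 3 \<or> j = 4 \<or> j = 5" by auto
    then show "q j \<in> star_config (lsel v0 v1 v2)"
    proof (elim disjE)
      assume "j = 0"
      show ?thesis unfolding \<open>j = 0\<close>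
        by (rule star_mem[where i=1 and j=2])
           (simp_all add: lsel_def q_def cf dot_vsub_r v3 Dn nz_of_dot[where a=v0])
    next
      assume "j = 1"
      show ?thesis unfolding \<open>j = 1\<close>
        by (rule star_mem[where i=0 and j=2])
           (simp_all add: lsel_def q_def cf dot_vsub_r v3 Dn nz_of_dot[where a=v1])
    next
      assume "j = 2"
      show ?thesis unfolding \<open>j = 2\<close>
        by (rule star_mem[where i=0 and j=1])
           (simp_all add: lsel_def q_def cf dot_vsub_r v3 Dn nz_of_dot[where a=v2])
    next
      assume "j = 3"
      show ?thesis unfolding \<open>j = 3\<close>
        by (rule star_mem[where i=2 and j=3])
           (simp_all add: lsel_def q_def cf dot_vsub_r v3 Dn nz_of_dot[where a=v0])
    next
      assume "j = 4"
      show ?thesis unfolding \<open>j = 4\<close>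
        by (rule star_mem[where i=1 and j=3])
           (simp_all add: lsel_def q_def cf dot_vsub_r v3 Dn nz_of_dot[where a=v0])
    next
      assume "j = 5"
      show ?thesis unfolding \<open>j = 5\<close>
        by (rule star_mem[where i=0 and j=3])
           (simp_all add: lsel_def q_def cf dot_vsub_r v3 Dn nz_of_dot[where a=v1])
    qed
  qed
  show ?thesis by (rule apolar_of_span[where J="{..<6}" and B=q and d=c]) (use mem Fe in auto)
qed

definition lc :: "vec3 \<Rightarrow> vec3 \<Rightarrow> vec3 \<Rightarrow> complex \<Rightarrow> complex \<Rightarrow> complex \<Rightarrow> vec3" where
  "lc e0 e1 e2 a0 a1 a2 = vadd (vsmult a0 e0) (vadd (vsmult a1 e1) (vsmult a2 e2))"

lemma dot_lc: "lin_eval p (lc e0 e1 e2 a0 a1 a2) = a0 * lin_eval p e0 + a1 * lin_eval p e1 + a2 * lin_eval p e2"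
  unfolding lc_def by (cases p; cases e0; cases e1; cases e2) (simp add: algebra_simps)

lemma prod3_sym:
  fixes a0 a1 a2 b0 b1 b2 c0 c1 c2 x y z :: complex
  shows "(a0*x + a1*y + a2*z) * (b0*x + b1*y + b2*z) * (c0*x + c1*y + c2*z) =
    (a0*b0*c0) * (x*x*x) + (a1*b1*c1) * (y*y*y) + (a2*b2*c2) * (z*z*z)
  + (a0*b0*c1 + a0*b1*c0 + a1*b0*c0) * (x*x*y)
  + (a0*b1*c1 + a1*b0*c1 + a1*b1*c0) * (x*y*y)
  + (a0*b0*c2 + a0*b2*c0 + a2*b0*c0) * (x*x*z)
  + (a0*b2*c2 + a2*b0*c2 + a2*b2*c0) * (x*z*z)
  + (a1*b1*c2 + a1*b2*c1 + a2*b1*c1) * (y*y*z)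
  + (a1*b2*c2 + a2*b1*c2 + a2*b2*c1) * (y*z*z)
  + (a0*b1*c2 + a0*b2*c1 + a1*b0*c2 + a1*b2*c0 + a2*b0*c1 + a2*b1*c0) * (x*y*z)"
  by algebra

lemma TL_comb:
  "TL L (lc e0 e1 e2 a0 a1 a2) (lc e0 e1 e2 b0 b1 b2) (lc e0 e1 e2 c0 c1 c2) =
    (a0*b0*c0) * TL L e0 e0 e0 + (a1*b1*c1) * TL L e1 e1 e1 + (a2*b2*c2) * TL L e2 e2 e2
  + (a0*b0*c1 + a0*b1*c0 + a1*b0*c0) * TL L e0 e0 e1
  + (a0*b1*c1 + a1*b0*c1 + a1*b1*c0) * TL L e0 e1 e1
  + (a0*b0*c2 + a0*b2*c0 + a2*b0*c0) * TL L e0 e0 e2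
  + (a0*b2*c2 + a2*b0*c2 + a2*b2*c0) * TL L e0 e2 e2
  + (a1*b1*c2 + a1*b2*c1 + a2*b1*c1) * TL L e1 e1 e2
  + (a1*b2*c2 + a2*b1*c2 + a2*b2*c1) * TL L e1 e2 e2
  + (a0*b1*c2 + a0*b2*c1 + a1*b0*c2 + a1*b2*c0 + a2*b0*c1 + a2*b1*c0) * TL L e0 e1 e2"
  unfolding TL_def dot_lc prod3_sym
  by (simp only: sum.distrib sum_distrib_left[symmetric])

lemma det3_lc:
  "det3 (lc e0 e1 e2 a0 a1 a2) (lc e0 e1 e2 b0 b1 b2) (lc e0 e1 e2 c0 c1 c2) =
    (a0*(b1*c2 - b2*c1) - a1*(b0*c2 - b2*c0) + a2*(b0*c1 - b1*c0)) * det3 e0 e1 e2"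
proof -
  obtain x0 x1 x2 where xe: "e0 = (x0,x1,x2)" by (cases e0) auto
  obtain y0 y1 y2 where ye: "e1 = (y0,y1,y2)" by (cases e1) auto
  obtain z0 z1 z2 where ze: "e2 = (z0,z1,z2)" by (cases e2) auto
  show ?thesis unfolding xe ye ze lc_def det3_def by simp algebra
qed

lemma quad_roots:
  fixes a b c :: complex
  assumes "a \<noteq> 0" "b^2 - 4*a*c \<noteq> 0"
  shows "\<exists>x y. x \<noteq> y \<and> a * (x + y) = - b \<and> a * (x * y) = c"
proof -
  define d where "d = csqrt (b^2 - 4*a*c)"
  have d2: "d^2 = b^2 - 4*a*c" unfolding d_def by simp
  have dn: "d \<noteq> 0" using assms(2) d2 by auto
  define x where "x = (-b + d)/(2*a)"
  define y where "y = (-b - d)/(2*a)"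
  have "x \<noteq> y" using dn assms(1) unfolding x_def y_def by (auto simp: field_simps)
  moreover have "a * (x + y) = - b" using assms(1) unfolding x_def y_def by (simp add: field_simps)
  moreover have "a * (x * y) = c"
  proof -
    have "a * (x * y) = (b^2 - d^2) / (4*a)" using assms(1) unfolding x_def y_def
      by (simp add: field_simps power2_eq_square)
    also have "\<dots> = c" using assms(1) unfolding d2 by (simp add: field_simps)
    finally show ?thesis .
  qed
  ultimately show ?thesis by blast
qed

lemma frame_good:
  fixes L :: "nat \<Rightarrow> vec3" and e0 e1 e2 :: vec3
  defines "t000 \<equiv> TL L e0 e0 e0" and "t111 \<equiv> TL L e1 e1 e1" and "t222 \<equiv> TL L e2 e2 e2"
    and "t001 \<equiv> TL L e0 e0 e1" and "t011 \<equiv> TL L e0 e1 e1" and "t002 \<equiv> TL L e0 e0 e2"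
    and "t022 \<equiv> TL L e0 e2 e2" and "t112 \<equiv> TL L e1 e1 e2" and "t122 \<equiv> TL L e1 e2 e2"
    and "t012 \<equiv> TL L e0 e1 e2"
  assumes fr: "det3 e0 e1 e2 \<noteq> 0"
    and Dn: "t000*t012 - t001*t002 \<noteq> 0"
    and d1: "(t000*t112 - t011*t002)^2 - 4*(t000*t012 - t001*t002)*(t001*t112 - t011*t012) \<noteq> 0"
    and d2: "(t000*t122 - t022*t001)^2 - 4*(t000*t012 - t001*t002)*(t002*t122 - t022*t012) \<noteq> 0"
  shows "\<exists>v0 v1 v2. det3 v0 v1 v2 \<noteq> 0 \<and> TL L v0 v1 v2 = 0 \<and> TL L v0 v0 v1 + TL L v0 v1 v1 = 0
     \<and> TL L v0 v0 v2 + TL L v0 v2 v2 = 0 \<and> TL L v1 v1 v2 + TL L v1 v2 v2 = 0"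
proof -
  define D where "D = t000*t012 - t001*t002"
  obtain s1 s2 where s: "s1 \<noteq> s2" "D * (s1 + s2) = - (t000*t112 - t011*t002)" "D * (s1 * s2) = t001*t112 - t011*t012"
    using quad_roots[of D "t000*t112 - t011*t002" "t001*t112 - t011*t012"] Dn d1 unfolding D_def by blast
  obtain r1 r2 where r: "r1 \<noteq> r2" "D * (r1 + r2) = - (t000*t122 - t022*t001)" "D * (r1 * r2) = t002*t122 - t022*t012"
    using quad_roots[of D "t000*t122 - t022*t001" "t002*t122 - t022*t012"] Dn d2 unfolding D_def by blast
  have DD: "D \<noteq> 0" using Dn unfolding D_def .
  define a where "a = (r2 - r1) / (s1 - s2)"
  have ha: "a * (s1 - s2) = r2 - r1" using s(1) unfolding a_def by simp
  have an: "a \<noteq> 0" using s(1) r(1) unfolding a_def by simp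
  define v0 where "v0 = lc e0 e1 e2 (a*s1) a 0"
  define v1 where "v1 = lc e0 e1 e2 (-a*s2) (-a) 0"
  define v2 where "v2 = lc e0 e1 e2 r1 0 1"
  note tc = TL_comb[of L e0 e1 e2, folded t000_def t111_def t222_def t001_def t011_def t002_def t022_def t112_def t122_def t012_def]
  have "det3 v0 v1 v2 = (- (a*a) * (s1 - s2)) * det3 e0 e1 e2"
    unfolding v0_def v1_def v2_def det3_lc by (simp add: power2_eq_square algebra_simps)
  then have c0: "det3 v0 v1 v2 \<noteq> 0" using fr an s(1) by simp
  have "D * TL L v0 v1 v2 = 0"
    unfolding v0_def v1_def v2_def tc using s(2,3) r(2,3) ha unfolding D_def by algebra
  then have c1: "TL L v0 v1 v2 = 0" using DD by simp
  have "D * (TL L v0 v0 v1 + TL L v0 v1 v1) = 0"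
    unfolding v0_def v1_def v2_def tc using s(2,3) r(2,3) ha unfolding D_def by algebra
  then have c2: "TL L v0 v0 v1 + TL L v0 v1 v1 = 0" using DD by simp
  have "D * (TL L v0 v0 v2 + TL L v0 v2 v2) = 0"
    unfolding v0_def v1_def v2_def tc using s(2,3) r(2,3) ha unfolding D_def by algebra
  then have c3: "TL L v0 v0 v2 + TL L v0 v2 v2 = 0" using DD by simp
  have "D * (TL L v1 v1 v2 + TL L v1 v2 v2) = 0"
    unfolding v0_def v1_def v2_def tc using s(2,3) r(2,3) ha unfolding D_def by algebra
  then have c4: "TL L v1 v1 v2 + TL L v1 v2 v2 = 0" using DD by simp
  show ?thesis using c0 c1 c2 c3 c4 by blast
qed

definition E :: "nat \<Rightarrow> vec3" where
  "E i = (if i = 0 then (1,0,0) else if i = 1 then (0,1,0) else (0,0,1))"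

definition det3m :: "(nat \<Rightarrow> nat \<Rightarrow> complex) \<Rightarrow> complex" where
  "det3m m = m 0 0 * (m 1 1 * m 2 2 - m 1 2 * m 2 1) - m 0 1 * (m 1 0 * m 2 2 - m 1 2 * m 2 0)
     + m 0 2 * (m 1 0 * m 2 1 - m 1 1 * m 2 0)"

definition Hdet :: "(nat \<Rightarrow> vec3) \<Rightarrow> vec3 \<Rightarrow> complex" where
  "Hdet L e = det3m (\<lambda>i j. TL L e (E i) (E j))"

definition bil :: "(nat \<Rightarrow> nat \<Rightarrow> complex) \<Rightarrow> vec3 \<Rightarrow> vec3 \<Rightarrow> complex" where
  "bil m x y = (case x of (x0,x1,x2) \<Rightarrow> case y of (y0,y1,y2) \<Rightarrow>
     x0*y0*m 0 0 + x0*y1*m 0 1 + x0*y2*m 0 2 + x1*y0*m 1 0 + x1*y1*m 1 1 + x1*y2*m 1 2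
   + x2*y0*m 2 0 + x2*y1*m 2 1 + x2*y2*m 2 2)"

lemma TL_sym: "TL L b a c = TL L a b c" "TL L a c b = TL L a b c"
  unfolding TL_def by (simp_all add: mult_ac)

lemma prod_bil:
  fixes l0 l1 l2 x0 x1 x2 y0 y1 y2 e :: complex
  shows "e * (l0*x0 + l1*x1 + l2*x2) * (l0*y0 + l1*y1 + l2*y2) =
    x0*y0*(e*l0*l0) + x0*y1*(e*l0*l1) + x0*y2*(e*l0*l2) + x1*y0*(e*l1*l0) + x1*y1*(e*l1*l1)
  + x1*y2*(e*l1*l2) + x2*y0*(e*l2*l0) + x2*y1*(e*l2*l1) + x2*y2*(e*l2*l2)"
  by algebra

lemma bilin_T: "TL L e x y = bil (\<lambda>i j. TL L e (E i) (E j)) x y"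
proof -
  obtain x0 x1 x2 where xe: "x = (x0,x1,x2)" by (cases x) auto
  obtain y0 y1 y2 where ye: "y = (y0,y1,y2)" by (cases y) auto
  have l: "\<And>p. lin_eval p (x0,x1,x2) = fst p * x0 + fst (snd p) * x1 + snd (snd p) * x2"
    by (case_tac p) auto
  have l2: "\<And>p. lin_eval p (y0,y1,y2) = fst p * y0 + fst (snd p) * y1 + snd (snd p) * y2"
    by (case_tac p) auto
  have lE: "\<And>p. lin_eval p (E 0) = fst p" "\<And>p. lin_eval p (E 1) = fst (snd p)" "\<And>p. lin_eval p (E 2) = snd (snd p)"
    by (case_tac p, simp add: E_def)+
  show ?thesis unfolding xe ye bil_def TL_def l l2 lE prod_bil
    by (simp only: prod.case sum.distrib sum_distrib_left[symmetric])
qed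

lemma detPMP:
  fixes m :: "nat \<Rightarrow> nat \<Rightarrow> complex"
  assumes sym: "m 1 0 = m 0 1" "m 2 0 = m 0 2" "m 2 1 = m 1 2"
  shows "det3m (\<lambda>a b. bil m (P a) (P b)) = (det3 (P 0) (P 1) (P 2))^2 * det3m m"
proof -
  obtain a0 a1 a2 where ae: "P 0 = (a0,a1,a2)" by (cases "P 0") auto
  obtain b0 b1 b2 where be: "P 1 = (b0,b1,b2)" by (cases "P 1") auto
  obtain c0 c1 c2 where ce: "P 2 = (c0,c1,c2)" by (cases "P 2") auto
  show ?thesis unfolding det3m_def ae be ce bil_def det3_def sym by simp algebra
qed

lemma ker_basis:
  assumes "lin_eval g e0 \<noteq> 0"
  shows "\<exists>c1 c2. lin_eval g c1 = 0 \<and> lin_eval g c2 = 0 \<and> det3 e0 c1 c2 \<noteq> 0"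
proof -
  obtain g0 g1 g2 where ge: "g = (g0,g1,g2)" by (cases g) auto
  obtain x0 x1 x2 where xe: "e0 = (x0,x1,x2)" by (cases e0) auto
  have gnz: "g0 \<noteq> 0 \<or> g1 \<noteq> 0 \<or> g2 \<noteq> 0" using assms unfolding ge xe by auto
  have lg: "lin_eval g e0 = g0*x0 + g1*x1 + g2*x2" unfolding ge xe by simp
  consider "g2 \<noteq> 0" | "g1 \<noteq> 0" | "g0 \<noteq> 0" using gnz by blast
  then show ?thesis
  proof cases
    case 1
    have "det3 e0 (g2,0,-g0) (0,g2,-g1) = g2 * lin_eval g e0" unfolding lg unfolding xe det3_def by simp algebra
    then show ?thesis using 1 assms unfolding ge by (intro exI[of _ "(g2,0,-g0)"] exI[of _ "(0,g2,-g1)"]) (simp add: algebra_simps)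
  next
    case 2
    have "det3 e0 (g1,-g0,0) (0,g2,-g1) = g1 * lin_eval g e0" unfolding lg unfolding xe det3_def by simp algebra
    then show ?thesis using 2 assms unfolding ge by (intro exI[of _ "(g1,-g0,0)"] exI[of _ "(0,g2,-g1)"]) (simp add: algebra_simps)
  next
    case 3
    have "det3 e0 (-g1,g0,0) (-g2,0,g0) = g0 * lin_eval g e0" unfolding lg unfolding xe det3_def by simp algebra
    then show ?thesis using 3 assms unfolding ge by (intro exI[of _ "(-g1,g0,0)"] exI[of _ "(-g2,0,g0)"]) (simp add: algebra_simps)
  qed
qed

lemma iso_pair:
  fixes p q r :: complex
  assumes "p*r - q^2 \<noteq> 0"
  shows "\<exists>a1 b1 a2 b2. a1^2*p + 2*a1*b1*q + b1^2*r = 0 \<and> a2^2*p + 2*a2*b2*q + b2^2*r = 0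
    \<and> a1*a2*p + (a1*b2 + a2*b1)*q + b1*b2*r \<noteq> 0 \<and> a1*b2 - a2*b1 \<noteq> 0"
proof (cases "p = 0")
  case True
  then have qn: "q \<noteq> 0" using assms by auto
  show ?thesis
    by (rule exI[of _ 1], rule exI[of _ 0], rule exI[of _ r], rule exI[of _ "-2*q"])
       (use True qn in \<open>simp add: power2_eq_square algebra_simps\<close>)
next
  case False
  define \<sigma> where "\<sigma> = csqrt (q^2 - p*r)"
  have s2: "\<sigma>^2 = q^2 - p*r" unfolding \<sigma>_def by simp
  have sn: "\<sigma> \<noteq> 0" using assms s2 by (auto simp: algebra_simps)
  have k: "(-q+\<sigma>)*(-q-\<sigma>)*p + ((-q+\<sigma>)*p + (-q-\<sigma>)*p)*q + p*p*r = 2*p*(p*r - q^2)"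
    using s2 by algebra
  have i1: "(-q+\<sigma>)^2*p + 2*(-q+\<sigma>)*p*q + p^2*r = 0"
    using s2 by algebra
  have i2: "(-q-\<sigma>)^2*p + 2*(-q-\<sigma>)*p*q + p^2*r = 0"
    using s2 by algebra
  have d: "(-q+\<sigma>)*p - (-q-\<sigma>)*p = 2*p*\<sigma>" by (simp add: algebra_simps)
  show ?thesis
    by (rule exI[of _ "-q+\<sigma>"], rule exI[of _ p], rule exI[of _ "-q-\<sigma>"], rule exI[of _ p])
       (use k i1 i2 d False sn assms in simp)
qed

lemma poly_nz:
  fixes f0 K a0 a1 a2 a3 :: complex
  assumes f0: "f0 \<noteq> 0" and K: "K \<noteq> 0"
  shows "smult f0 ([:a0,a1,a2,a3:] * [:a0,a1,a2,a3:]) + monom K 3 \<noteq> 0"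
proof
  assume h: "smult f0 ([:a0,a1,a2,a3:] * [:a0,a1,a2,a3:]) + monom K 3 = 0"
  have c0: "coeff (smult f0 ([:a0,a1,a2,a3:] * [:a0,a1,a2,a3:]) + monom K 3) 0 = f0 * (a0*a0)"
    by (simp add: coeff_mult)
  have c2: "coeff (smult f0 ([:a0,a1,a2,a3:] * [:a0,a1,a2,a3:]) + monom K 3) 2 = f0 * (a0*a2 + a1*a1 + a2*a0)"
    by (simp add: coeff_mult numeral_eq_Suc atMost_Suc)
  have c3: "coeff (smult f0 ([:a0,a1,a2,a3:] * [:a0,a1,a2,a3:]) + monom K 3) 3 = f0 * (a0*a3 + a1*a2 + a2*a1 + a3*a0) + K"
    by (simp add: coeff_mult numeral_eq_Suc atMost_Suc)
  have "f0 * (a0*a0) = 0" using c0 unfolding h by simp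
  then have "a0 = 0" using f0 by simp
  have "f0 * (a0*a2 + a1*a1 + a2*a0) = 0" using c2 unfolding h by simp
  then have "a1 = 0" using f0 \<open>a0 = 0\<close> by simp
  have "f0 * (a0*a3 + a1*a2 + a2*a1 + a3*a0) + K = 0" using c3 unfolding h by simp
  then show False using K \<open>a0 = 0\<close> \<open>a1 = 0\<close> by simp
qed

lemma poly_avoid:
  fixes f0 K K' a0 a1 a2 a3 b0 b1 b2 b3 :: complex
  assumes f0: "f0 \<noteq> 0" and K: "K \<noteq> 0" and K': "K' \<noteq> 0"
  shows "\<exists>s. s \<noteq> 0 \<and> f0 * (a0 + a1*s + a2*s^2 + a3*s^3)^2 + K*s^3 \<noteq> 0
     \<and> f0 * (b0 + b1*s + b2*s^2 + b3*s^3)^2 + K'*s^3 \<noteq> 0"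
proof -
  define P where "P = smult f0 ([:a0,a1,a2,a3:] * [:a0,a1,a2,a3:]) + monom K 3"
  define P' where "P' = smult f0 ([:b0,b1,b2,b3:] * [:b0,b1,b2,b3:]) + monom K' 3"
  define Q where "Q = [:0,1:] * P * P'"
  have "Q \<noteq> 0" unfolding Q_def P_def P'_def using poly_nz[OF f0 K] poly_nz[OF f0 K'] by simp
  then have "finite {s. poly Q s = 0}" by (rule poly_roots_finite)
  then obtain s where s: "poly Q s \<noteq> 0"
    using infinite_UNIV_char_0[where 'a=complex] by (metis (mono_tags, lifting) ex_new_if_finite mem_Collect_eq)
  have pP: "poly P s = f0 * (a0 + a1*s + a2*s^2 + a3*s^3)^2 + K*s^3"
    unfolding P_def by (simp add: poly_monom; algebra)
  have pP': "poly P' s = f0 * (b0 + b1*s + b2*s^2 + b3*s^3)^2 + K'*s^3"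
    unfolding P'_def by (simp add: poly_monom; algebra)
  have "s \<noteq> 0" "poly P s \<noteq> 0" "poly P' s \<noteq> 0" using s unfolding Q_def by auto
  then show ?thesis using pP pP' by auto
qed

lemma lc_100: "lc e0 c1 c2 1 0 0 = e0"
  unfolding lc_def by (cases e0; cases c1; cases c2) simp

lemma good_exists:
  assumes f0: "TL L e0 e0 e0 \<noteq> 0" and H: "Hdet L e0 \<noteq> 0"
  shows "\<exists>v0 v1 v2. det3 v0 v1 v2 \<noteq> 0 \<and> TL L v0 v1 v2 = 0 \<and> TL L v0 v0 v1 + TL L v0 v1 v1 = 0
     \<and> TL L v0 v0 v2 + TL L v0 v2 v2 = 0 \<and> TL L v1 v1 v2 + TL L v1 v2 v2 = 0"
proof -
  define f where "f = TL L e0 e0 e0"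
  define M where "M i j = TL L e0 (E i) (E j)" for i j
  have Tb: "\<And>x y. TL L e0 x y = bil M x y" unfolding M_def by (rule bilin_T)
  define g where "g = (TL L e0 e0 (E 0), TL L e0 e0 (E 1), TL L e0 e0 (E 2))"
  have gx: "TL L e0 e0 x = lin_eval g x" for x
  proof -
    obtain x0 x1 x2 where xe: "x = (x0,x1,x2)" by (cases x) auto
    obtain y0 y1 y2 where ye: "e0 = (y0,y1,y2)" by (cases e0) auto
    show ?thesis unfolding g_def Tb unfolding xe ye bil_def E_def by simp algebra
  qed
  have "lin_eval g e0 \<noteq> 0" using gx[of e0] f0 by simp
  then obtain c1 c2 where c: "lin_eval g c1 = 0" "lin_eval g c2 = 0" "det3 e0 c1 c2 \<noteq> 0"
    using ker_basis by blast
  define p where "p = TL L e0 c1 c1"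
  define q where "q = TL L e0 c1 c2"
  define r where "r = TL L e0 c2 c2"
  have z1: "TL L e0 e0 c1 = 0" "TL L e0 e0 c2 = 0" using c gx by auto
  have symM: "M 1 0 = M 0 1" "M 2 0 = M 0 2" "M 2 1 = M 1 2" unfolding M_def by (simp_all add: TL_sym)
  define P where "P a = (if a = (0::nat) then e0 else if a = 1 then c1 else c2)" for a
  have dP: "det3m (\<lambda>a b. bil M (P a) (P b)) = (det3 e0 c1 c2)^2 * det3m M"
    using detPMP[OF symM, of P] unfolding P_def by simp
  have dP2: "det3m (\<lambda>a b. bil M (P a) (P b)) = f * (p*r - q^2)"
    unfolding Tb[symmetric] det3m_def P_def f_def p_def q_def r_def
    using z1 by (simp add: TL_sym power2_eq_square algebra_simps)
  have hm: "det3m M = Hdet L e0" unfolding Hdet_def M_def ..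
  have pq: "p*r - q^2 \<noteq> 0" using dP dP2 hm H c(3) f0 unfolding f_def by auto
  obtain a1 b1 a2 b2 where ab: "a1^2*p + 2*a1*b1*q + b1^2*r = 0" "a2^2*p + 2*a2*b2*q + b2^2*r = 0"
    "a1*a2*p + (a1*b2 + a2*b1)*q + b1*b2*r \<noteq> 0" "a1*b2 - a2*b1 \<noteq> 0"
    using iso_pair[OF pq] by blast
  define \<kappa> where "\<kappa> = a1*a2*p + (a1*b2 + a2*b1)*q + b1*b2*r"
  define n1 where "n1 = lc e0 c1 c2 0 a1 b1"
  define n2 where "n2 = lc e0 c1 c2 0 a2 b2"
  note tc1 = TL_comb[of L e0 c1 c2]
  have w1: "TL L e0 e0 n1 = 0"
    using tc1[of 1 0 0 1 0 0 0 a1 b1, unfolded lc_100, folded n1_def] z1 by simp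
  have w2: "TL L e0 e0 n2 = 0"
    using tc1[of 1 0 0 1 0 0 0 a2 b2, unfolded lc_100, folded n2_def] z1 by simp
  have w3: "TL L e0 n1 n1 = 0"
    using tc1[of 1 0 0 0 a1 b1 0 a1 b1, unfolded lc_100, folded n1_def] ab(1)
    unfolding p_def[symmetric] q_def[symmetric] r_def[symmetric] by (simp add: power2_eq_square algebra_simps)
  have w4: "TL L e0 n2 n2 = 0"
    using tc1[of 1 0 0 0 a2 b2 0 a2 b2, unfolded lc_100, folded n2_def] ab(2)
    unfolding p_def[symmetric] q_def[symmetric] r_def[symmetric] by (simp add: power2_eq_square algebra_simps)
  have w5: "TL L e0 n1 n2 = \<kappa>"
    using tc1[of 1 0 0 0 a1 b1 0 a2 b2, unfolded lc_100, folded n1_def n2_def]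
    unfolding \<kappa>_def p_def[symmetric] q_def[symmetric] r_def[symmetric] by (simp add: algebra_simps)
  note w = w1 w2 w3 w4 w5
  have dn: "det3 e0 n1 n2 \<noteq> 0"
    using det3_lc[of e0 c1 c2 1 0 0 0 a1 b1 0 a2 b2, unfolded lc_100, folded n1_def n2_def] ab(4) c(3)
    by (simp add: mult.commute)
  define k0 where "k0 = TL L n1 n1 n1"
  define k1 where "k1 = TL L n1 n1 n2"
  define k2 where "k2 = TL L n1 n2 n2"
  define k3 where "k3 = TL L n2 n2 n2"
  have fn: "f \<noteq> 0" using f0 unfolding f_def .
  have kn: "\<kappa> \<noteq> 0" using ab(3) unfolding \<kappa>_def .
  obtain s where s: "s \<noteq> 0" "f * (k0 + (4*k1)*s + (5*k2)*s^2 + (2*k3)*s^3)^2 + (72*\<kappa>^3)*s^3 \<noteq> 0"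
     "f * (k0 + (5*k1)*s + (8*k2)*s^2 + (4*k3)*s^3)^2 + (144*\<kappa>^3)*s^3 \<noteq> 0"
  proof -
    have K: "72*\<kappa>^3 \<noteq> 0" "144*\<kappa>^3 \<noteq> 0" using kn by auto
    show ?thesis using poly_avoid[OF fn K, of k0 "4*k1" "5*k2" "2*k3" k0 "5*k1" "8*k2" "4*k3"] that by blast
  qed
  define e1 where "e1 = lc e0 n1 n2 0 1 s"
  define e2 where "e2 = lc e0 n1 n2 0 1 (2*s)"
  note tc2 = TL_comb[of L e0 n1 n2]
  have t1: "TL L e0 e0 e1 = 0"
    using tc2[of 1 0 0 1 0 0 0 1 s, unfolded lc_100, folded e1_def] w by simp
  have t2: "TL L e0 e1 e1 = 2*s*\<kappa>"
    using tc2[of 1 0 0 0 1 s 0 1 s, unfolded lc_100, folded e1_def] w by simp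
  have t3: "TL L e0 e0 e2 = 0"
    using tc2[of 1 0 0 1 0 0 0 1 "2*s", unfolded lc_100, folded e2_def] w by simp
  have t4: "TL L e0 e2 e2 = 4*s*\<kappa>"
    using tc2[of 1 0 0 0 1 "2*s" 0 1 "2*s", unfolded lc_100, folded e2_def] w by simp
  have t5: "TL L e0 e1 e2 = 3*s*\<kappa>"
    using tc2[of 1 0 0 0 1 s 0 1 "2*s", unfolded lc_100, folded e1_def e2_def] w by simp
  have t6: "TL L e1 e1 e2 = k0 + (4*k1)*s + (5*k2)*s^2 + (2*k3)*s^3"
    using tc2[of 0 1 s 0 1 s 0 1 "2*s", folded e1_def e2_def] w
    unfolding k0_def k1_def k2_def k3_def by (simp add: power2_eq_square power3_eq_cube algebra_simps)
  have t7: "TL L e1 e2 e2 = k0 + (5*k1)*s + (8*k2)*s^2 + (4*k3)*s^3"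
    using tc2[of 0 1 s 0 1 "2*s" 0 1 "2*s", folded e1_def e2_def] w
    unfolding k0_def k1_def k2_def k3_def by (simp add: power2_eq_square power3_eq_cube algebra_simps)
  note t = t1 t2 t3 t4 t5 t6 t7
  have fr: "det3 e0 e1 e2 \<noteq> 0"
    using det3_lc[of e0 n1 n2 1 0 0 0 1 s 0 1 "2*s", unfolded lc_100, folded e1_def e2_def] dn s(1)
    by simp
  show ?thesis
  proof (rule frame_good[OF fr])
    show "TL L e0 e0 e0 * TL L e0 e1 e2 - TL L e0 e0 e1 * TL L e0 e0 e2 \<noteq> 0"
      unfolding t f_def[symmetric] using fn kn s(1) by simp
    have "(TL L e0 e0 e0 * TL L e1 e1 e2 - TL L e0 e1 e1 * TL L e0 e0 e2)\<^sup>2 -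
      4 * (TL L e0 e0 e0 * TL L e0 e1 e2 - TL L e0 e0 e1 * TL L e0 e0 e2) *
      (TL L e0 e0 e1 * TL L e1 e1 e2 - TL L e0 e1 e1 * TL L e0 e1 e2)
      = f * (f * (k0 + (4*k1)*s + (5*k2)*s^2 + (2*k3)*s^3)^2 + (72*\<kappa>^3)*s^3)"
      unfolding t f_def[symmetric] by algebra
    then show "(TL L e0 e0 e0 * TL L e1 e1 e2 - TL L e0 e1 e1 * TL L e0 e0 e2)\<^sup>2 -
      4 * (TL L e0 e0 e0 * TL L e0 e1 e2 - TL L e0 e0 e1 * TL L e0 e0 e2) *
      (TL L e0 e0 e1 * TL L e1 e1 e2 - TL L e0 e1 e1 * TL L e0 e1 e2) \<noteq> 0"
      using fn s(2) by simp
    have "(TL L e0 e0 e0 * TL L e1 e2 e2 - TL L e0 e2 e2 * TL L e0 e0 e1)\<^sup>2 -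
      4 * (TL L e0 e0 e0 * TL L e0 e1 e2 - TL L e0 e0 e1 * TL L e0 e0 e2) *
      (TL L e0 e0 e2 * TL L e1 e2 e2 - TL L e0 e2 e2 * TL L e0 e1 e2)
      = f * (f * (k0 + (5*k1)*s + (8*k2)*s^2 + (4*k3)*s^3)^2 + (144*\<kappa>^3)*s^3)"
      unfolding t f_def[symmetric] by algebra
    then show "(TL L e0 e0 e0 * TL L e1 e2 e2 - TL L e0 e2 e2 * TL L e0 e0 e1)\<^sup>2 -
      4 * (TL L e0 e0 e0 * TL L e0 e1 e2 - TL L e0 e0 e1 * TL L e0 e0 e2) *
      (TL L e0 e0 e2 * TL L e1 e2 e2 - TL L e0 e2 e2 * TL L e0 e1 e2) \<noteq> 0"
      using fn s(3) by simp
  qed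
qed

lemma lt5_eq:
  assumes "distinct [a,b,c,d,e]" "a<5" "b<5" "c<5" "d<5" "e<(5::nat)"
  shows "{..<5::nat} = {a,b,c,d,e}"
proof -
  have sub: "{a,b,c,d,e} \<subseteq> {..<5}" using assms by auto
  have "card {a,b,c,d,e} = 5" using assms(1) distinct_card[OF assms(1)] by simp
  then show ?thesis using card_subset_eq[OF _ sub] by simp
qed

lemma sum5:
  assumes "distinct [a,b,c,d,e]" "a<5" "b<5" "c<5" "d<5" "e<(5::nat)"
  shows "(\<Sum>x<5. f x) = f a + f b + f c + f d + (f e :: complex)"
  using assms by (simp add: lt5_eq[OF assms] add.assoc)

lemma hasdec_of_set:
  assumes form: "is_form 3 F" and fin: "finite J" and cd: "card J \<le> 4"
    and eq: "\<forall>u. cval F u = (\<Sum>j\<in>J. c j * (lin_eval (M j) u)^3)"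
  shows "hasdec F 4"
proof -
  obtain h where h: "bij_betw h {..<card J} J" using ex_bij_betw_nat_finite[OF fin] by (metis atLeast0LessThan)
  define c' where "c' x = (if x < card J then c (h x) else 0)" for x
  define M' where "M' x = M (h x)" for x
  have "\<forall>u. cval F u = (\<Sum>x<4. c' x * (lin_eval (M' x) u)^3)"
  proof
    fix u
    have "(\<Sum>j\<in>J. c j * (lin_eval (M j) u)^3) = (\<Sum>x<card J. c (h x) * (lin_eval (M (h x)) u)^3)"
      using sum.reindex_bij_betw[OF h, of "\<lambda>j. c j * (lin_eval (M j) u)^3"] by simp
    also have "\<dots> = (\<Sum>x<4. c' x * (lin_eval (M' x) u)^3)"
    proof -
      have "(\<Sum>x<4. c' x * (lin_eval (M' x) u)^3) = (\<Sum>x<card J. c' x * (lin_eval (M' x) u)^3)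
          + (\<Sum>x\<in>{card J..<4}. c' x * (lin_eval (M' x) u)^3)"
        using cd by (metis (no_types, lifting) atLeast0LessThan le0 sum.atLeastLessThan_concat)
      also have "(\<Sum>x\<in>{card J..<4}. c' x * (lin_eval (M' x) u)^3) = 0"
        by (rule sum.neutral) (simp add: c'_def)
      finally show ?thesis by (simp add: c'_def M'_def)
    qed
    finally show "cval F u = (\<Sum>x<4. c' x * (lin_eval (M' x) u)^3)" using eq[rule_format, of u] by simp
  qed
  then show ?thesis by (rule hasdec_of_fun[OF form])
qed

lemma dot_smult: "lin_eval (vsmult c v) u = c * lin_eval v u"
  by (cases v; cases u) (simp add: algebra_simps)

lemma prop_of_cross0:
  assumes "cross x y = (0,0,0)"
  shows "(\<exists>c. x = vsmult c y) \<or> (\<exists>c. y = vsmult c x)"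
proof -
  obtain x0 x1 x2 where xe: "x = (x0,x1,x2)" by (cases x) auto
  obtain y0 y1 y2 where ye: "y = (y0,y1,y2)" by (cases y) auto
  have e: "x1*y2 = x2*y1" "x2*y0 = x0*y2" "x0*y1 = x1*y0" using assms unfolding xe ye by auto
  consider "y0 \<noteq> 0" | "y1 \<noteq> 0" | "y2 \<noteq> 0" | "y0 = 0 \<and> y1 = 0 \<and> y2 = 0" by blast
  then show ?thesis
  proof cases
    case 1
    have "x = vsmult (x0/y0) y" unfolding xe ye using 1 e by (simp add: field_simps; metis mult.commute)
    then show ?thesis by blast
  next
    case 2
    have "x = vsmult (x1/y1) y" unfolding xe ye using 2 e by (simp add: field_simps; metis mult.commute)
    then show ?thesis by blast
  next
    case 3
    have "x = vsmult (x2/y2) y" unfolding xe ye using 3 e by (simp add: field_simps; metis mult.commute)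
    then show ?thesis by blast
  next
    case 4
    have "y = vsmult 0 x" unfolding xe ye using 4 by simp
    then show ?thesis by blast
  qed
qed

lemma pair_indep:
  fixes L :: "nat \<Rightarrow> vec3" and i j :: nat
  assumes form: "is_form 3 F" and Fd: "F = (\<lambda>e. \<Sum>i<5. lin_pow (L i) 3 e)" and nd: "\<not> hasdec F 4"
    and ij: "i < 5" "j < 5" "i \<noteq> j"
  shows "cross (L i) (L j) \<noteq> (0,0,0)"
proof
  assume "cross (L i) (L j) = (0,0,0)"
  then have "\<exists>k k' c. k < 5 \<and> k' < 5 \<and> k \<noteq> k' \<and> L k' = vsmult c (L k)"
    using prop_of_cross0 ij by metis
  then obtain k k' c where kk: "k < 5" "k' < 5" "k \<noteq> k'" "L k' = vsmult c (L k)" by blast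
  define J where "J = {..<5::nat} - {k'}"
  have finJ: "finite J" unfolding J_def by simp
  have cJ: "card J \<le> 4" unfolding J_def using kk(2) by simp
  have kJ: "k \<in> J" unfolding J_def using kk by simp
  have "\<forall>u. cval F u = (\<Sum>x\<in>J. (if x = k then 1 + c^3 else 1) * (lin_eval (L x) u)^3)"
  proof
    fix u
    define g where "g x = (lin_eval (L x) u)^3" for x
    have gk: "g k' = c^3 * g k" unfolding g_def kk(4) dot_smult by (simp add: power_mult_distrib)
    have "cval F u = (\<Sum>x<5. g x)" unfolding g_def by (rule cval_dec[OF Fd])
    also have "\<dots> = g k' + (\<Sum>x\<in>J. g x)" unfolding J_def using kk(2) by (simp add: sum.remove)
    finally have A: "cval F u = g k' + (\<Sum>x\<in>J. g x)" .
    have B: "(\<Sum>x\<in>J. (if x = k then 1 + c^3 else 1) * g x) = (\<Sum>x\<in>J. g x) + (\<Sum>x\<in>J. if x = k then c^3 * g x else 0)"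
    proof -
      have "(\<Sum>x\<in>J. (if x = k then 1 + c^3 else 1) * g x) = (\<Sum>x\<in>J. g x + (if x = k then c^3 * g x else 0))"
        by (rule sum.cong) (auto simp: algebra_simps)
      then show ?thesis by (simp add: sum.distrib)
    qed
    have C: "(\<Sum>x\<in>J. if x = k then c^3 * g x else 0) = c^3 * g k" using finJ kJ by simp
    from A B C show "cval F u = (\<Sum>x\<in>J. (if x = k then 1 + c^3 else 1) * (lin_eval (L x) u)^3)"
      unfolding g_def using gk unfolding g_def by (simp add: algebra_simps)
  qed
  then have "hasdec F 4" by (rule hasdec_of_set[OF form finJ cJ])
  then show False using nd by simp
qed

definition vcomp :: "vec3 \<Rightarrow> nat \<Rightarrow> complex" where
  "vcomp v a = lin_eval v (E a)"

lemma det3m_rank1: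
  "det3m (\<lambda>a b. ci * vcomp P a * vcomp P b + cj * vcomp Q a * vcomp Q b + ck * vcomp R a * vcomp R b)
    = ci * cj * ck * (det3 P Q R)^2"
proof -
  obtain a0 a1 a2 where ae: "P = (a0,a1,a2)" by (cases P) auto
  obtain b0 b1 b2 where be: "Q = (b0,b1,b2)" by (cases Q) auto
  obtain c0 c1 c2 where ce: "R = (c0,c1,c2)" by (cases R) auto
  show ?thesis unfolding ae be ce det3m_def vcomp_def E_def det3_def by simp algebra
qed

lemma witness_good:
  assumes d: "distinct [i,j,k,m,n]" "i<5" "j<5" "k<5" "m<5" "n<(5::nat)"
    and h: "det3 (L i) (L j) (L k) \<noteq> 0" "det3 (L i) (L m) (L n) \<noteq> 0"
      "det3 (L j) (L m) (L n) \<noteq> 0" "det3 (L k) (L m) (L n) \<noteq> 0"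
  shows "Hdet L (cross (L m) (L n)) \<noteq> 0"
proof -
  define e where "e = cross (L m) (L n)"
  have zm: "lin_eval (L m) e = 0" "lin_eval (L n) e = 0" unfolding e_def by (rule cross_facts)+
  have ce: "lin_eval (L x) e = det3 (L x) (L m) (L n)" for x unfolding e_def det3_def ..
  have zm2: "det3 (L m) (L m) (L n) = 0" "det3 (L n) (L m) (L n) = 0" using zm unfolding ce .
  have "(\<lambda>a b. TL L e (E a) (E b)) = (\<lambda>a b. det3 (L i) (L m) (L n) * vcomp (L i) a * vcomp (L i) b
     + det3 (L j) (L m) (L n) * vcomp (L j) a * vcomp (L j) b + det3 (L k) (L m) (L n) * vcomp (L k) a * vcomp (L k) b)"
    unfolding TL_def sum5[OF d] vcomp_def by (simp add: ce zm2 mult_ac)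
  then have "Hdet L e = det3 (L i) (L m) (L n) * det3 (L j) (L m) (L n) * det3 (L k) (L m) (L n) * (det3 (L i) (L j) (L k))^2"
    unfolding Hdet_def by (simp add: det3m_rank1)
  then show ?thesis using h unfolding e_def by simp
qed

fun vcnj :: "vec3 \<Rightarrow> vec3" where "vcnj (a,b,c) = (cnj a, cnj b, cnj c)"

lemma dot_vcnj_nz: assumes "v \<noteq> (0,0,0)" shows "lin_eval v (vcnj v) \<noteq> 0"
proof -
  obtain a b c where ve: "v = (a,b,c)" by (cases v) auto
  have "lin_eval v (vcnj v) = complex_of_real ((cmod a)^2 + (cmod b)^2 + (cmod c)^2)"
    unfolding ve by (simp add: complex_norm_square[symmetric])
  moreover have "(cmod a)^2 + (cmod b)^2 + (cmod c)^2 > 0"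
    using assms unfolding ve by (auto simp: add_pos_nonneg add_nonneg_pos)
  ultimately show ?thesis by (metis of_real_eq_0_iff less_irrefl)
qed

lemma cramer_id:
  "vsmult (det3 a b w) x = vadd (vsmult (det3 x b w) a) (vadd (vsmult (det3 a x w) b) (vsmult (det3 a b x) w))"
proof -
  obtain a0 a1 a2 where ae: "a = (a0,a1,a2)" by (cases a) auto
  obtain b0 b1 b2 where be: "b = (b0,b1,b2)" by (cases b) auto
  obtain w0 w1 w2 where we: "w = (w0,w1,w2)" by (cases w) auto
  obtain x0 x1 x2 where xe: "x = (x0,x1,x2)" by (cases x) auto
  show ?thesis unfolding ae be we xe det3_def by simp (intro conjI; algebra)
qed

lemma span2:
  assumes n: "cross a b \<noteq> (0,0,0)" and z: "det3 a b x = 0"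
  shows "\<exists>\<alpha> \<beta>. x = vadd (vsmult \<alpha> a) (vsmult \<beta> b)"
proof -
  define w where "w = vcnj (cross a b)"
  have dw: "det3 a b w \<noteq> 0"
  proof -
    have "det3 a b w = lin_eval w (cross a b)"
      unfolding det3_def w_def by (cases a; cases b) (simp add: algebra_simps)
    also have "\<dots> = lin_eval (cross a b) w" by (cases "cross a b"; cases w) (simp add: algebra_simps)
    finally show ?thesis using dot_vcnj_nz[OF n] unfolding w_def by simp
  qed
  have "vsmult (det3 a b w) x = vadd (vsmult (det3 x b w) a) (vsmult (det3 a x w) b)"
    using cramer_id[of a b w x] z by (cases a; cases b; cases w; simp)
  then have "x = vadd (vsmult (det3 x b w / det3 a b w) a) (vsmult (det3 a x w / det3 a b w) b)"
    using dw by (cases a; cases b; cases x; simp add: field_simps)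
  then show ?thesis by blast
qed

lemma dot_comb: "lin_eval (vadd (vsmult \<alpha> x) (vsmult \<beta> y)) u = \<alpha> * lin_eval x u + \<beta> * lin_eval y u"
  by (simp add: dot_vadd_l dot_smult)

lemma dot_comm: "lin_eval x y = lin_eval y x"
  by (cases x; cases y) (simp add: mult.commute)

lemma binary4:
  fixes A0 A1 A2 A3 X Y :: complex
  shows "A0*X^3 + 3*A1*X^2*Y + 3*A2*X*Y^2 + A3*Y^3 = (A0 - A2)*X^3 + (A3 - A1)*Y^3
    + ((A1+A2)/2)*(X+Y)^3 + ((A2-A1)/2)*(X-Y)^3"
  by (simp add: field_simps) algebra

lemma det3m_struct:
  "det3m (\<lambda>x y. p * vcomp P x * vcomp P y + q * (vcomp P x * vcomp Q y + vcomp Q x * vcomp P y)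
      + r * vcomp Q x * vcomp Q y + vcomp M x * vcomp M y) = (det3 P Q M)^2 * (p*r - q^2)"
proof -
  obtain a0 a1 a2 where ae: "P = (a0,a1,a2)" by (cases P) auto
  obtain b0 b1 b2 where be: "Q = (b0,b1,b2)" by (cases Q) auto
  obtain c0 c1 c2 where ce: "M = (c0,c1,c2)" by (cases M) auto
  show ?thesis unfolding ae be ce det3m_def vcomp_def E_def det3_def by simp algebra
qed

lemma dot_smult_r: "lin_eval x (vsmult c v) = c * lin_eval x v"
  by (cases x; cases v) (simp add: algebra_simps)

lemma solve3_raw:
  shows "lin_eval A (vadd (vsmult s (cross B M)) (vadd (vsmult t (cross M A)) (cross A B))) = s * det3 A B M"
    "lin_eval B (vadd (vsmult s (cross B M)) (vadd (vsmult t (cross M A)) (cross A B))) = t * det3 A B M"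
    "lin_eval M (vadd (vsmult s (cross B M)) (vadd (vsmult t (cross M A)) (cross A B))) = det3 A B M"
proof -
  obtain a0 a1 a2 where ae: "A = (a0,a1,a2)" by (cases A) auto
  obtain b0 b1 b2 where be: "B = (b0,b1,b2)" by (cases B) auto
  obtain c0 c1 c2 where ce: "M = (c0,c1,c2)" by (cases M) auto
  show "lin_eval A (vadd (vsmult s (cross B M)) (vadd (vsmult t (cross M A)) (cross A B))) = s * det3 A B M"
    unfolding ae be ce det3_def by simp algebra
  show "lin_eval B (vadd (vsmult s (cross B M)) (vadd (vsmult t (cross M A)) (cross A B))) = t * det3 A B M"
    unfolding ae be ce det3_def by simp algebra
  show "lin_eval M (vadd (vsmult s (cross B M)) (vadd (vsmult t (cross M A)) (cross A B))) = det3 A B M"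
    unfolding ae be ce det3_def by simp algebra
qed

lemma solve3:
  assumes "det3 A B M \<noteq> 0"
  shows "lin_eval A (vsmult (1/det3 A B M) (vadd (vsmult s (cross B M)) (vadd (vsmult t (cross M A)) (cross A B)))) = s"
    "lin_eval B (vsmult (1/det3 A B M) (vadd (vsmult s (cross B M)) (vadd (vsmult t (cross M A)) (cross A B)))) = t"
    "lin_eval M (vsmult (1/det3 A B M) (vadd (vsmult s (cross B M)) (vadd (vsmult t (cross M A)) (cross A B)))) = 1"
  unfolding dot_smult_r solve3_raw using assms by simp_all

lemma coplanar:
  fixes L :: "nat \<Rightarrow> vec3" and a b c d m :: nat
  assumes form: "is_form 3 F" and Fd: "F = (\<lambda>e. \<Sum>i<5. lin_pow (L i) 3 e)" and nd: "\<not> hasdec F 4"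
    and dist: "distinct [a,b,c,d,m]" "a<5" "b<5" "c<5" "d<5" "m<5"
    and zc: "det3 (L a) (L b) (L c) = 0" and zd: "det3 (L a) (L b) (L d) = 0"
  shows "\<exists>e. Hdet L e \<noteq> 0"
proof -
  have nab: "cross (L a) (L b) \<noteq> (0,0,0)" by (rule pair_indep[OF form Fd nd]) (use dist in auto)
  obtain \<alpha>c \<beta>c where Lc: "L c = vadd (vsmult \<alpha>c (L a)) (vsmult \<beta>c (L b))" using span2[OF nab zc] by blast
  obtain \<alpha>d \<beta>d where Ld: "L d = vadd (vsmult \<alpha>d (L a)) (vsmult \<beta>d (L b))" using span2[OF nab zd] by blast
  define A0 where "A0 = 1 + \<alpha>c^3 + \<alpha>d^3"
  define A1 where "A1 = \<alpha>c^2*\<beta>c + \<alpha>d^2*\<beta>d"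
  define A2 where "A2 = \<alpha>c*\<beta>c^2 + \<alpha>d*\<beta>d^2"
  define A3 where "A3 = 1 + \<beta>c^3 + \<beta>d^3"
  have fF: "cval F u = A0*(lin_eval (L a) u)^3 + 3*A1*(lin_eval (L a) u)^2*(lin_eval (L b) u)
     + 3*A2*(lin_eval (L a) u)*(lin_eval (L b) u)^2 + A3*(lin_eval (L b) u)^3 + (lin_eval (L m) u)^3" for u
    unfolding cval_dec[OF Fd] sum5[OF dist] Lc Ld dot_comb A0_def A1_def A2_def A3_def
    by algebra
  show ?thesis
  proof (cases "det3 (L a) (L b) (L m) = 0")
    case True
    obtain \<alpha>m \<beta>m where Lm: "L m = vadd (vsmult \<alpha>m (L a)) (vsmult \<beta>m (L b))" using span2[OF nab True] by blast
    define B0 where "B0 = A0 + \<alpha>m^3"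
    define B1 where "B1 = A1 + \<alpha>m^2*\<beta>m"
    define B2 where "B2 = A2 + \<alpha>m*\<beta>m^2"
    define B3 where "B3 = A3 + \<beta>m^3"
    define cs where "cs j = [B0 - B2, B3 - B1, (B1+B2)/2, (B2-B1)/2] ! j" for j
    define vs where "vs j = [L a, L b, vadd (L a) (L b), vsub (L a) (L b)] ! j" for j
    have "\<forall>u. cval F u = (\<Sum>j<4. cs j * (lin_eval (vs j) u)^3)"
    proof
      fix u
      have "cval F u = B0*(lin_eval (L a) u)^3 + 3*B1*(lin_eval (L a) u)^2*(lin_eval (L b) u)
        + 3*B2*(lin_eval (L a) u)*(lin_eval (L b) u)^2 + B3*(lin_eval (L b) u)^3"
        unfolding fF Lm dot_comb B0_def B1_def B2_def B3_def by algebra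
      also have "\<dots> = (\<Sum>j<4. cs j * (lin_eval (vs j) u)^3)"
        unfolding binary4 by (simp add: cs_def vs_def numeral_eq_Suc dot_vadd_l dot_vsub_l)
      finally show "cval F u = (\<Sum>j<4. cs j * (lin_eval (vs j) u)^3)" .
    qed
    then have "hasdec F 4" by (rule hasdec_of_fun[OF form])
    then show ?thesis using nd by simp
  next
    case False
    define \<delta> where "\<delta> = det3 (L a) (L b) (L m)"
    have dn: "\<delta> \<noteq> 0" using False unfolding \<delta>_def .
    define hb where "hb s t = (A0*s + A1*t)*(A2*s + A3*t) - (A1*s + A2*t)^2" for s t
    show ?thesis
    proof (cases "hb 1 0 \<noteq> 0 \<or> hb 0 1 \<noteq> 0 \<or> hb 1 1 \<noteq> 0")
      case True
      then obtain s t where st: "hb s t \<noteq> 0" by blast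
      define e where "e = vsmult (1/\<delta>) (vadd (vsmult s (cross (L b) (L m))) (vadd (vsmult t (cross (L m) (L a))) (cross (L a) (L b))))"
      have ea: "lin_eval (L a) e = s" and eb: "lin_eval (L b) e = t" and em: "lin_eval (L m) e = 1"
        unfolding e_def \<delta>_def using solve3[OF dn[unfolded \<delta>_def]] by simp_all
      have ec: "lin_eval (L c) e = \<alpha>c*s + \<beta>c*t" unfolding Lc dot_comb ea eb ..
      have ed: "lin_eval (L d) e = \<alpha>d*s + \<beta>d*t" unfolding Ld dot_comb ea eb ..
      have vc: "vcomp (L c) x = \<alpha>c * vcomp (L a) x + \<beta>c * vcomp (L b) x" for x
        unfolding vcomp_def Lc dot_comb ..
      have vd: "vcomp (L d) x = \<alpha>d * vcomp (L a) x + \<beta>d * vcomp (L b) x" for x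
        unfolding vcomp_def Ld dot_comb ..
      have ent: "(\<lambda>x y. TL L e (E x) (E y)) = (\<lambda>x y. (A0*s+A1*t) * vcomp (L a) x * vcomp (L a) y
          + (A1*s+A2*t) * (vcomp (L a) x * vcomp (L b) y + vcomp (L b) x * vcomp (L a) y)
          + (A2*s+A3*t) * vcomp (L b) x * vcomp (L b) y + vcomp (L m) x * vcomp (L m) y)"
      proof (intro ext)
        fix x y
        show "TL L e (E x) (E y) = (A0*s+A1*t) * vcomp (L a) x * vcomp (L a) y
          + (A1*s+A2*t) * (vcomp (L a) x * vcomp (L b) y + vcomp (L b) x * vcomp (L a) y)
          + (A2*s+A3*t) * vcomp (L b) x * vcomp (L b) y + vcomp (L m) x * vcomp (L m) y"
          unfolding TL_def sum5[OF dist] ea eb ec ed em vcomp_def[symmetric] vc vd A0_def A1_def A2_def A3_def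
          by algebra
      qed
      have "Hdet L e = \<delta>^2 * hb s t"
        unfolding Hdet_def ent det3m_struct hb_def \<delta>_def by simp
      then have "Hdet L e \<noteq> 0" using st dn by simp
      then show ?thesis by blast
    next
      case False
      then have h10: "A0*A2 = A1^2" and h01: "A1*A3 = A2^2" and h11: "A0*A3 = A1*A2"
        unfolding hb_def by (auto simp: power2_eq_square algebra_simps)
      have "\<exists>\<kappa> M. \<forall>u. cval F u = \<kappa> * (lin_eval M u)^3 + (lin_eval (L m) u)^3"
      proof (cases "A0 = 0")
        case False
        define M where "M = vadd (vsmult 1 (L a)) (vsmult (A1/A0) (L b))"
        have "\<forall>u. cval F u = A0 * (lin_eval M u)^3 + (lin_eval (L m) u)^3"
        proof
          fix u
          have a2: "A2 = A1^2/A0" using h10 False by (simp add: field_simps)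
          have a3: "A3 = A1^3/A0^2" using h11 h10 False by (simp add: field_simps power2_eq_square power3_eq_cube)
          show "cval F u = A0 * (lin_eval M u)^3 + (lin_eval (L m) u)^3"
            unfolding fF M_def dot_comb a2 a3 using False by (simp add: field_simps) algebra
        qed
        then show ?thesis by blast
      next
        case True
        have a1: "A1 = 0" using h10 True by simp
        have a2: "A2 = 0" using h01 a1 by simp
        have "\<forall>u. cval F u = A3 * (lin_eval (L b) u)^3 + (lin_eval (L m) u)^3"
          unfolding fF True a1 a2 by simp
        then show ?thesis by blast
      qed
      then obtain \<kappa> M where kM: "\<forall>u. cval F u = \<kappa> * (lin_eval M u)^3 + (lin_eval (L m) u)^3" by blast
      define cs where "cs j = [\<kappa>, 1, 0, 0] ! j" for j
      define vs where "vs j = [M, L m, M, M] ! j" for j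
      have "\<forall>u. cval F u = (\<Sum>j<4. cs j * (lin_eval (vs j) u)^3)"
        using kM by (simp add: cs_def vs_def numeral_eq_Suc)
      then have "hasdec F 4" by (rule hasdec_of_fun[OF form])
      then show ?thesis using nd by simp
    qed
  qed
qed

lemma det3_swap23: "det3 x z y = - det3 x y z"
proof -
  obtain a0 a1 a2 where ae: "x = (a0,a1,a2)" by (cases x) auto
  obtain b0 b1 b2 where be: "y = (b0,b1,b2)" by (cases y) auto
  obtain c0 c1 c2 where ce: "z = (c0,c1,c2)" by (cases z) auto
  show ?thesis unfolding ae be ce det3_def by simp algebra
qed

lemma taut5:
  fixes zabc zabd zabe zacd zace zade zbcd zbce zbde zcde :: bool
  shows "(\<not> zcde \<and> \<not> zabc \<and> \<not> zabd \<and> \<not> zabe)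
   \<or> (\<not> zbde \<and> \<not> zabc \<and> \<not> zacd \<and> \<not> zace)
   \<or> (\<not> zbce \<and> \<not> zabd \<and> \<not> zacd \<and> \<not> zade)
   \<or> (\<not> zbcd \<and> \<not> zabe \<and> \<not> zace \<and> \<not> zade)
   \<or> (\<not> zade \<and> \<not> zabc \<and> \<not> zbcd \<and> \<not> zbce)
   \<or> (\<not> zace \<and> \<not> zabd \<and> \<not> zbcd \<and> \<not> zbde)
   \<or> (\<not> zacd \<and> \<not> zabe \<and> \<not> zbce \<and> \<not> zbde)
   \<or> (\<not> zabe \<and> \<not> zacd \<and> \<not> zbcd \<and> \<not> zcde)
   \<or> (\<not> zabd \<and> \<not> zace \<and> \<not> zbce \<and> \<not> zcde)
   \<or> (\<not> zabc \<and> \<not> zade \<and> \<not> zbde \<and> \<not> zcde)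
   \<or> (zabc \<and> zabd)
   \<or> (zabc \<and> zabe)
   \<or> (zabd \<and> zabe)
   \<or> (zabc \<and> zacd)
   \<or> (zabc \<and> zace)
   \<or> (zacd \<and> zace)
   \<or> (zabd \<and> zacd)
   \<or> (zabd \<and> zade)
   \<or> (zacd \<and> zade)
   \<or> (zabe \<and> zace)
   \<or> (zabe \<and> zade)
   \<or> (zace \<and> zade)
   \<or> (zabc \<and> zbcd)
   \<or> (zabc \<and> zbce)
   \<or> (zbcd \<and> zbce)
   \<or> (zabd \<and> zbcd)
   \<or> (zabd \<and> zbde)
   \<or> (zbcd \<and> zbde)
   \<or> (zabe \<and> zbce)
   \<or> (zabe \<and> zbde)
   \<or> (zbce \<and> zbde)
   \<or> (zacd \<and> zbcd)
   \<or> (zacd \<and> zcde)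
   \<or> (zbcd \<and> zcde)
   \<or> (zace \<and> zbce)
   \<or> (zace \<and> zcde)
   \<or> (zbce \<and> zcde)
   \<or> (zade \<and> zbde)
   \<or> (zade \<and> zcde)
   \<or> (zbde \<and> zcde)"
  by argo

lemma cg_01:
  fixes L :: "nat \<Rightarrow> vec3"
  assumes form: "is_form 3 F" and Fd: "F = (\<lambda>e. \<Sum>i<5. lin_pow (L i) 3 e)" and nd: "\<not> hasdec F 4"
    and H: "\<not> (det3 (L 2) (L 3) (L 4) = 0) \<and> \<not> (det3 (L 0) (L 1) (L 2) = 0) \<and> \<not> (det3 (L 0) (L 1) (L 3) = 0) \<and> \<not> (det3 (L 0) (L 1) (L 4) = 0)"
  shows "\<exists>e. Hdet L e \<noteq> 0"
proof -
  have "Hdet L (cross (L 0) (L 1)) \<noteq> 0"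
    by (rule witness_good[of 2 3 4 0 1 L]) (use H det3_cyc[where x="L 2" and y="L 0" and z="L 1"] det3_cyc[where x="L 3" and y="L 0" and z="L 1"] det3_cyc[where x="L 4" and y="L 0" and z="L 1"] in simp_all)
  then show ?thesis by blast
qed

lemma cg_02:
  fixes L :: "nat \<Rightarrow> vec3"
  assumes form: "is_form 3 F" and Fd: "F = (\<lambda>e. \<Sum>i<5. lin_pow (L i) 3 e)" and nd: "\<not> hasdec F 4"
    and H: "\<not> (det3 (L 1) (L 3) (L 4) = 0) \<and> \<not> (det3 (L 0) (L 1) (L 2) = 0) \<and> \<not> (det3 (L 0) (L 2) (L 3) = 0) \<and> \<not> (det3 (L 0) (L 2) (L 4) = 0)"
  shows "\<exists>e. Hdet L e \<noteq> 0"
proof -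
  have "Hdet L (cross (L 0) (L 2)) \<noteq> 0"
    by (rule witness_good[of 1 3 4 0 2 L]) (use H det3_swap[where x="L 0" and y="L 1" and z="L 2"] det3_cyc[where x="L 3" and y="L 0" and z="L 2"] det3_cyc[where x="L 4" and y="L 0" and z="L 2"] in simp_all)
  then show ?thesis by blast
qed

lemma cg_03:
  fixes L :: "nat \<Rightarrow> vec3"
  assumes form: "is_form 3 F" and Fd: "F = (\<lambda>e. \<Sum>i<5. lin_pow (L i) 3 e)" and nd: "\<not> hasdec F 4"
    and H: "\<not> (det3 (L 1) (L 2) (L 4) = 0) \<and> \<not> (det3 (L 0) (L 1) (L 3) = 0) \<and> \<not> (det3 (L 0) (L 2) (L 3) = 0) \<and> \<not> (det3 (L 0) (L 3) (L 4) = 0)"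
  shows "\<exists>e. Hdet L e \<noteq> 0"
proof -
  have "Hdet L (cross (L 0) (L 3)) \<noteq> 0"
    by (rule witness_good[of 1 2 4 0 3 L]) (use H det3_swap[where x="L 0" and y="L 1" and z="L 3"] det3_swap[where x="L 0" and y="L 2" and z="L 3"] det3_cyc[where x="L 4" and y="L 0" and z="L 3"] in simp_all)
  then show ?thesis by blast
qed

lemma cg_04:
  fixes L :: "nat \<Rightarrow> vec3"
  assumes form: "is_form 3 F" and Fd: "F = (\<lambda>e. \<Sum>i<5. lin_pow (L i) 3 e)" and nd: "\<not> hasdec F 4"
    and H: "\<not> (det3 (L 1) (L 2) (L 3) = 0) \<and> \<not> (det3 (L 0) (L 1) (L 4) = 0) \<and> \<not> (det3 (L 0) (L 2) (L 4) = 0) \<and> \<not> (det3 (L 0) (L 3) (L 4) = 0)"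
  shows "\<exists>e. Hdet L e \<noteq> 0"
proof -
  have "Hdet L (cross (L 0) (L 4)) \<noteq> 0"
    by (rule witness_good[of 1 2 3 0 4 L]) (use H det3_swap[where x="L 0" and y="L 1" and z="L 4"] det3_swap[where x="L 0" and y="L 2" and z="L 4"] det3_swap[where x="L 0" and y="L 3" and z="L 4"] in simp_all)
  then show ?thesis by blast
qed

lemma cg_12:
  fixes L :: "nat \<Rightarrow> vec3"
  assumes form: "is_form 3 F" and Fd: "F = (\<lambda>e. \<Sum>i<5. lin_pow (L i) 3 e)" and nd: "\<not> hasdec F 4"
    and H: "\<not> (det3 (L 0) (L 3) (L 4) = 0) \<and> \<not> (det3 (L 0) (L 1) (L 2) = 0) \<and> \<not> (det3 (L 1) (L 2) (L 3) = 0) \<and> \<not> (det3 (L 1) (L 2) (L 4) = 0)"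
  shows "\<exists>e. Hdet L e \<noteq> 0"
proof -
  have "Hdet L (cross (L 1) (L 2)) \<noteq> 0"
    by (rule witness_good[of 0 3 4 1 2 L]) (use H det3_cyc[where x="L 3" and y="L 1" and z="L 2"] det3_cyc[where x="L 4" and y="L 1" and z="L 2"] in simp_all)
  then show ?thesis by blast
qed

lemma cg_13:
  fixes L :: "nat \<Rightarrow> vec3"
  assumes form: "is_form 3 F" and Fd: "F = (\<lambda>e. \<Sum>i<5. lin_pow (L i) 3 e)" and nd: "\<not> hasdec F 4"
    and H: "\<not> (det3 (L 0) (L 2) (L 4) = 0) \<and> \<not> (det3 (L 0) (L 1) (L 3) = 0) \<and> \<not> (det3 (L 1) (L 2) (L 3) = 0) \<and> \<not> (det3 (L 1) (L 3) (L 4) = 0)"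
  shows "\<exists>e. Hdet L e \<noteq> 0"
proof -
  have "Hdet L (cross (L 1) (L 3)) \<noteq> 0"
    by (rule witness_good[of 0 2 4 1 3 L]) (use H det3_swap[where x="L 1" and y="L 2" and z="L 3"] det3_cyc[where x="L 4" and y="L 1" and z="L 3"] in simp_all)
  then show ?thesis by blast
qed

lemma cg_14:
  fixes L :: "nat \<Rightarrow> vec3"
  assumes form: "is_form 3 F" and Fd: "F = (\<lambda>e. \<Sum>i<5. lin_pow (L i) 3 e)" and nd: "\<not> hasdec F 4"
    and H: "\<not> (det3 (L 0) (L 2) (L 3) = 0) \<and> \<not> (det3 (L 0) (L 1) (L 4) = 0) \<and> \<not> (det3 (L 1) (L 2) (L 4) = 0) \<and> \<not> (det3 (L 1) (L 3) (L 4) = 0)"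
  shows "\<exists>e. Hdet L e \<noteq> 0"
proof -
  have "Hdet L (cross (L 1) (L 4)) \<noteq> 0"
    by (rule witness_good[of 0 2 3 1 4 L]) (use H det3_swap[where x="L 1" and y="L 2" and z="L 4"] det3_swap[where x="L 1" and y="L 3" and z="L 4"] in simp_all)
  then show ?thesis by blast
qed

lemma cg_23:
  fixes L :: "nat \<Rightarrow> vec3"
  assumes form: "is_form 3 F" and Fd: "F = (\<lambda>e. \<Sum>i<5. lin_pow (L i) 3 e)" and nd: "\<not> hasdec F 4"
    and H: "\<not> (det3 (L 0) (L 1) (L 4) = 0) \<and> \<not> (det3 (L 0) (L 2) (L 3) = 0) \<and> \<not> (det3 (L 1) (L 2) (L 3) = 0) \<and> \<not> (det3 (L 2) (L 3) (L 4) = 0)"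
  shows "\<exists>e. Hdet L e \<noteq> 0"
proof -
  have "Hdet L (cross (L 2) (L 3)) \<noteq> 0"
    by (rule witness_good[of 0 1 4 2 3 L]) (use H det3_cyc[where x="L 4" and y="L 2" and z="L 3"] in simp_all)
  then show ?thesis by blast
qed

lemma cg_24:
  fixes L :: "nat \<Rightarrow> vec3"
  assumes form: "is_form 3 F" and Fd: "F = (\<lambda>e. \<Sum>i<5. lin_pow (L i) 3 e)" and nd: "\<not> hasdec F 4"
    and H: "\<not> (det3 (L 0) (L 1) (L 3) = 0) \<and> \<not> (det3 (L 0) (L 2) (L 4) = 0) \<and> \<not> (det3 (L 1) (L 2) (L 4) = 0) \<and> \<not> (det3 (L 2) (L 3) (L 4) = 0)"
  shows "\<exists>e. Hdet L e \<noteq> 0"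
proof -
  have "Hdet L (cross (L 2) (L 4)) \<noteq> 0"
    by (rule witness_good[of 0 1 3 2 4 L]) (use H det3_swap[where x="L 2" and y="L 3" and z="L 4"] in simp_all)
  then show ?thesis by blast
qed

lemma cg_34:
  fixes L :: "nat \<Rightarrow> vec3"
  assumes form: "is_form 3 F" and Fd: "F = (\<lambda>e. \<Sum>i<5. lin_pow (L i) 3 e)" and nd: "\<not> hasdec F 4"
    and H: "\<not> (det3 (L 0) (L 1) (L 2) = 0) \<and> \<not> (det3 (L 0) (L 3) (L 4) = 0) \<and> \<not> (det3 (L 1) (L 3) (L 4) = 0) \<and> \<not> (det3 (L 2) (L 3) (L 4) = 0)"
  shows "\<exists>e. Hdet L e \<noteq> 0"
proof -
  have "Hdet L (cross (L 3) (L 4)) \<noteq> 0"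
    by (rule witness_good[of 0 1 2 3 4 L]) (use H  in simp_all)
  then show ?thesis by blast
qed

lemma cs_0123:
  fixes L :: "nat \<Rightarrow> vec3"
  assumes form: "is_form 3 F" and Fd: "F = (\<lambda>e. \<Sum>i<5. lin_pow (L i) 3 e)" and nd: "\<not> hasdec F 4"
    and H: "(det3 (L 0) (L 1) (L 2) = 0) \<and> (det3 (L 0) (L 1) (L 3) = 0)"
  shows "\<exists>e. Hdet L e \<noteq> 0"
  by (rule coplanar[OF form Fd nd, of 0 1 2 3 4]) (use H  in simp_all)

lemma cs_0124:
  fixes L :: "nat \<Rightarrow> vec3"
  assumes form: "is_form 3 F" and Fd: "F = (\<lambda>e. \<Sum>i<5. lin_pow (L i) 3 e)" and nd: "\<not> hasdec F 4"
    and H: "(det3 (L 0) (L 1) (L 2) = 0) \<and> (det3 (L 0) (L 1) (L 4) = 0)"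
  shows "\<exists>e. Hdet L e \<noteq> 0"
  by (rule coplanar[OF form Fd nd, of 0 1 2 4 3]) (use H  in simp_all)

lemma cs_0134:
  fixes L :: "nat \<Rightarrow> vec3"
  assumes form: "is_form 3 F" and Fd: "F = (\<lambda>e. \<Sum>i<5. lin_pow (L i) 3 e)" and nd: "\<not> hasdec F 4"
    and H: "(det3 (L 0) (L 1) (L 3) = 0) \<and> (det3 (L 0) (L 1) (L 4) = 0)"
  shows "\<exists>e. Hdet L e \<noteq> 0"
  by (rule coplanar[OF form Fd nd, of 0 1 3 4 2]) (use H  in simp_all)

lemma cs_0213:
  fixes L :: "nat \<Rightarrow> vec3"
  assumes form: "is_form 3 F" and Fd: "F = (\<lambda>e. \<Sum>i<5. lin_pow (L i) 3 e)" and nd: "\<not> hasdec F 4"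
    and H: "(det3 (L 0) (L 1) (L 2) = 0) \<and> (det3 (L 0) (L 2) (L 3) = 0)"
  shows "\<exists>e. Hdet L e \<noteq> 0"
  by (rule coplanar[OF form Fd nd, of 0 2 1 3 4]) (use H det3_swap23[where x="L 0" and y="L 1" and z="L 2"] in simp_all)

lemma cs_0214:
  fixes L :: "nat \<Rightarrow> vec3"
  assumes form: "is_form 3 F" and Fd: "F = (\<lambda>e. \<Sum>i<5. lin_pow (L i) 3 e)" and nd: "\<not> hasdec F 4"
    and H: "(det3 (L 0) (L 1) (L 2) = 0) \<and> (det3 (L 0) (L 2) (L 4) = 0)"
  shows "\<exists>e. Hdet L e \<noteq> 0"
  by (rule coplanar[OF form Fd nd, of 0 2 1 4 3]) (use H det3_swap23[where x="L 0" and y="L 1" and z="L 2"] in simp_all)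

lemma cs_0234:
  fixes L :: "nat \<Rightarrow> vec3"
  assumes form: "is_form 3 F" and Fd: "F = (\<lambda>e. \<Sum>i<5. lin_pow (L i) 3 e)" and nd: "\<not> hasdec F 4"
    and H: "(det3 (L 0) (L 2) (L 3) = 0) \<and> (det3 (L 0) (L 2) (L 4) = 0)"
  shows "\<exists>e. Hdet L e \<noteq> 0"
  by (rule coplanar[OF form Fd nd, of 0 2 3 4 1]) (use H  in simp_all)

lemma cs_0312:
  fixes L :: "nat \<Rightarrow> vec3"
  assumes form: "is_form 3 F" and Fd: "F = (\<lambda>e. \<Sum>i<5. lin_pow (L i) 3 e)" and nd: "\<not> hasdec F 4"
    and H: "(det3 (L 0) (L 1) (L 3) = 0) \<and> (det3 (L 0) (L 2) (L 3) = 0)"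
  shows "\<exists>e. Hdet L e \<noteq> 0"
  by (rule coplanar[OF form Fd nd, of 0 3 1 2 4]) (use H det3_swap23[where x="L 0" and y="L 1" and z="L 3"] det3_swap23[where x="L 0" and y="L 2" and z="L 3"] in simp_all)

lemma cs_0314:
  fixes L :: "nat \<Rightarrow> vec3"
  assumes form: "is_form 3 F" and Fd: "F = (\<lambda>e. \<Sum>i<5. lin_pow (L i) 3 e)" and nd: "\<not> hasdec F 4"
    and H: "(det3 (L 0) (L 1) (L 3) = 0) \<and> (det3 (L 0) (L 3) (L 4) = 0)"
  shows "\<exists>e. Hdet L e \<noteq> 0"
  by (rule coplanar[OF form Fd nd, of 0 3 1 4 2]) (use H det3_swap23[where x="L 0" and y="L 1" and z="L 3"] in simp_all)

lemma cs_0324: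
  fixes L :: "nat \<Rightarrow> vec3"
  assumes form: "is_form 3 F" and Fd: "F = (\<lambda>e. \<Sum>i<5. lin_pow (L i) 3 e)" and nd: "\<not> hasdec F 4"
    and H: "(det3 (L 0) (L 2) (L 3) = 0) \<and> (det3 (L 0) (L 3) (L 4) = 0)"
  shows "\<exists>e. Hdet L e \<noteq> 0"
  by (rule coplanar[OF form Fd nd, of 0 3 2 4 1]) (use H det3_swap23[where x="L 0" and y="L 2" and z="L 3"] in simp_all)

lemma cs_0412:
  fixes L :: "nat \<Rightarrow> vec3"
  assumes form: "is_form 3 F" and Fd: "F = (\<lambda>e. \<Sum>i<5. lin_pow (L i) 3 e)" and nd: "\<not> hasdec F 4"
    and H: "(det3 (L 0) (L 1) (L 4) = 0) \<and> (det3 (L 0) (L 2) (L 4) = 0)"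
  shows "\<exists>e. Hdet L e \<noteq> 0"
  by (rule coplanar[OF form Fd nd, of 0 4 1 2 3]) (use H det3_swap23[where x="L 0" and y="L 1" and z="L 4"] det3_swap23[where x="L 0" and y="L 2" and z="L 4"] in simp_all)

lemma cs_0413:
  fixes L :: "nat \<Rightarrow> vec3"
  assumes form: "is_form 3 F" and Fd: "F = (\<lambda>e. \<Sum>i<5. lin_pow (L i) 3 e)" and nd: "\<not> hasdec F 4"
    and H: "(det3 (L 0) (L 1) (L 4) = 0) \<and> (det3 (L 0) (L 3) (L 4) = 0)"
  shows "\<exists>e. Hdet L e \<noteq> 0"
  by (rule coplanar[OF form Fd nd, of 0 4 1 3 2]) (use H det3_swap23[where x="L 0" and y="L 1" and z="L 4"] det3_swap23[where x="L 0" and y="L 3" and z="L 4"] in simp_all)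

lemma cs_0423:
  fixes L :: "nat \<Rightarrow> vec3"
  assumes form: "is_form 3 F" and Fd: "F = (\<lambda>e. \<Sum>i<5. lin_pow (L i) 3 e)" and nd: "\<not> hasdec F 4"
    and H: "(det3 (L 0) (L 2) (L 4) = 0) \<and> (det3 (L 0) (L 3) (L 4) = 0)"
  shows "\<exists>e. Hdet L e \<noteq> 0"
  by (rule coplanar[OF form Fd nd, of 0 4 2 3 1]) (use H det3_swap23[where x="L 0" and y="L 2" and z="L 4"] det3_swap23[where x="L 0" and y="L 3" and z="L 4"] in simp_all)

lemma cs_1203:
  fixes L :: "nat \<Rightarrow> vec3"
  assumes form: "is_form 3 F" and Fd: "F = (\<lambda>e. \<Sum>i<5. lin_pow (L i) 3 e)" and nd: "\<not> hasdec F 4"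
    and H: "(det3 (L 0) (L 1) (L 2) = 0) \<and> (det3 (L 1) (L 2) (L 3) = 0)"
  shows "\<exists>e. Hdet L e \<noteq> 0"
  by (rule coplanar[OF form Fd nd, of 1 2 0 3 4]) (use H det3_cyc[where x="L 0" and y="L 1" and z="L 2"] in simp_all)

lemma cs_1204:
  fixes L :: "nat \<Rightarrow> vec3"
  assumes form: "is_form 3 F" and Fd: "F = (\<lambda>e. \<Sum>i<5. lin_pow (L i) 3 e)" and nd: "\<not> hasdec F 4"
    and H: "(det3 (L 0) (L 1) (L 2) = 0) \<and> (det3 (L 1) (L 2) (L 4) = 0)"
  shows "\<exists>e. Hdet L e \<noteq> 0"
  by (rule coplanar[OF form Fd nd, of 1 2 0 4 3]) (use H det3_cyc[where x="L 0" and y="L 1" and z="L 2"] in simp_all)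

lemma cs_1234:
  fixes L :: "nat \<Rightarrow> vec3"
  assumes form: "is_form 3 F" and Fd: "F = (\<lambda>e. \<Sum>i<5. lin_pow (L i) 3 e)" and nd: "\<not> hasdec F 4"
    and H: "(det3 (L 1) (L 2) (L 3) = 0) \<and> (det3 (L 1) (L 2) (L 4) = 0)"
  shows "\<exists>e. Hdet L e \<noteq> 0"
  by (rule coplanar[OF form Fd nd, of 1 2 3 4 0]) (use H  in simp_all)

lemma cs_1302:
  fixes L :: "nat \<Rightarrow> vec3"
  assumes form: "is_form 3 F" and Fd: "F = (\<lambda>e. \<Sum>i<5. lin_pow (L i) 3 e)" and nd: "\<not> hasdec F 4"
    and H: "(det3 (L 0) (L 1) (L 3) = 0) \<and> (det3 (L 1) (L 2) (L 3) = 0)"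
  shows "\<exists>e. Hdet L e \<noteq> 0"
  by (rule coplanar[OF form Fd nd, of 1 3 0 2 4]) (use H det3_cyc[where x="L 0" and y="L 1" and z="L 3"] det3_swap23[where x="L 1" and y="L 2" and z="L 3"] in simp_all)

lemma cs_1304:
  fixes L :: "nat \<Rightarrow> vec3"
  assumes form: "is_form 3 F" and Fd: "F = (\<lambda>e. \<Sum>i<5. lin_pow (L i) 3 e)" and nd: "\<not> hasdec F 4"
    and H: "(det3 (L 0) (L 1) (L 3) = 0) \<and> (det3 (L 1) (L 3) (L 4) = 0)"
  shows "\<exists>e. Hdet L e \<noteq> 0"
  by (rule coplanar[OF form Fd nd, of 1 3 0 4 2]) (use H det3_cyc[where x="L 0" and y="L 1" and z="L 3"] in simp_all)

lemma cs_1324: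
  fixes L :: "nat \<Rightarrow> vec3"
  assumes form: "is_form 3 F" and Fd: "F = (\<lambda>e. \<Sum>i<5. lin_pow (L i) 3 e)" and nd: "\<not> hasdec F 4"
    and H: "(det3 (L 1) (L 2) (L 3) = 0) \<and> (det3 (L 1) (L 3) (L 4) = 0)"
  shows "\<exists>e. Hdet L e \<noteq> 0"
  by (rule coplanar[OF form Fd nd, of 1 3 2 4 0]) (use H det3_swap23[where x="L 1" and y="L 2" and z="L 3"] in simp_all)

lemma cs_1402:
  fixes L :: "nat \<Rightarrow> vec3"
  assumes form: "is_form 3 F" and Fd: "F = (\<lambda>e. \<Sum>i<5. lin_pow (L i) 3 e)" and nd: "\<not> hasdec F 4"
    and H: "(det3 (L 0) (L 1) (L 4) = 0) \<and> (det3 (L 1) (L 2) (L 4) = 0)"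
  shows "\<exists>e. Hdet L e \<noteq> 0"
  by (rule coplanar[OF form Fd nd, of 1 4 0 2 3]) (use H det3_cyc[where x="L 0" and y="L 1" and z="L 4"] det3_swap23[where x="L 1" and y="L 2" and z="L 4"] in simp_all)

lemma cs_1403:
  fixes L :: "nat \<Rightarrow> vec3"
  assumes form: "is_form 3 F" and Fd: "F = (\<lambda>e. \<Sum>i<5. lin_pow (L i) 3 e)" and nd: "\<not> hasdec F 4"
    and H: "(det3 (L 0) (L 1) (L 4) = 0) \<and> (det3 (L 1) (L 3) (L 4) = 0)"
  shows "\<exists>e. Hdet L e \<noteq> 0"
  by (rule coplanar[OF form Fd nd, of 1 4 0 3 2]) (use H det3_cyc[where x="L 0" and y="L 1" and z="L 4"] det3_swap23[where x="L 1" and y="L 3" and z="L 4"] in simp_all)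

lemma cs_1423:
  fixes L :: "nat \<Rightarrow> vec3"
  assumes form: "is_form 3 F" and Fd: "F = (\<lambda>e. \<Sum>i<5. lin_pow (L i) 3 e)" and nd: "\<not> hasdec F 4"
    and H: "(det3 (L 1) (L 2) (L 4) = 0) \<and> (det3 (L 1) (L 3) (L 4) = 0)"
  shows "\<exists>e. Hdet L e \<noteq> 0"
  by (rule coplanar[OF form Fd nd, of 1 4 2 3 0]) (use H det3_swap23[where x="L 1" and y="L 2" and z="L 4"] det3_swap23[where x="L 1" and y="L 3" and z="L 4"] in simp_all)

lemma cs_2301:
  fixes L :: "nat \<Rightarrow> vec3"
  assumes form: "is_form 3 F" and Fd: "F = (\<lambda>e. \<Sum>i<5. lin_pow (L i) 3 e)" and nd: "\<not> hasdec F 4"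
    and H: "(det3 (L 0) (L 2) (L 3) = 0) \<and> (det3 (L 1) (L 2) (L 3) = 0)"
  shows "\<exists>e. Hdet L e \<noteq> 0"
  by (rule coplanar[OF form Fd nd, of 2 3 0 1 4]) (use H det3_cyc[where x="L 0" and y="L 2" and z="L 3"] det3_cyc[where x="L 1" and y="L 2" and z="L 3"] in simp_all)

lemma cs_2304:
  fixes L :: "nat \<Rightarrow> vec3"
  assumes form: "is_form 3 F" and Fd: "F = (\<lambda>e. \<Sum>i<5. lin_pow (L i) 3 e)" and nd: "\<not> hasdec F 4"
    and H: "(det3 (L 0) (L 2) (L 3) = 0) \<and> (det3 (L 2) (L 3) (L 4) = 0)"
  shows "\<exists>e. Hdet L e \<noteq> 0"
  by (rule coplanar[OF form Fd nd, of 2 3 0 4 1]) (use H det3_cyc[where x="L 0" and y="L 2" and z="L 3"] in simp_all)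

lemma cs_2314:
  fixes L :: "nat \<Rightarrow> vec3"
  assumes form: "is_form 3 F" and Fd: "F = (\<lambda>e. \<Sum>i<5. lin_pow (L i) 3 e)" and nd: "\<not> hasdec F 4"
    and H: "(det3 (L 1) (L 2) (L 3) = 0) \<and> (det3 (L 2) (L 3) (L 4) = 0)"
  shows "\<exists>e. Hdet L e \<noteq> 0"
  by (rule coplanar[OF form Fd nd, of 2 3 1 4 0]) (use H det3_cyc[where x="L 1" and y="L 2" and z="L 3"] in simp_all)

lemma cs_2401:
  fixes L :: "nat \<Rightarrow> vec3"
  assumes form: "is_form 3 F" and Fd: "F = (\<lambda>e. \<Sum>i<5. lin_pow (L i) 3 e)" and nd: "\<not> hasdec F 4"
    and H: "(det3 (L 0) (L 2) (L 4) = 0) \<and> (det3 (L 1) (L 2) (L 4) = 0)"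
  shows "\<exists>e. Hdet L e \<noteq> 0"
  by (rule coplanar[OF form Fd nd, of 2 4 0 1 3]) (use H det3_cyc[where x="L 0" and y="L 2" and z="L 4"] det3_cyc[where x="L 1" and y="L 2" and z="L 4"] in simp_all)

lemma cs_2403:
  fixes L :: "nat \<Rightarrow> vec3"
  assumes form: "is_form 3 F" and Fd: "F = (\<lambda>e. \<Sum>i<5. lin_pow (L i) 3 e)" and nd: "\<not> hasdec F 4"
    and H: "(det3 (L 0) (L 2) (L 4) = 0) \<and> (det3 (L 2) (L 3) (L 4) = 0)"
  shows "\<exists>e. Hdet L e \<noteq> 0"
  by (rule coplanar[OF form Fd nd, of 2 4 0 3 1]) (use H det3_cyc[where x="L 0" and y="L 2" and z="L 4"] det3_swap23[where x="L 2" and y="L 3" and z="L 4"] in simp_all)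

lemma cs_2413:
  fixes L :: "nat \<Rightarrow> vec3"
  assumes form: "is_form 3 F" and Fd: "F = (\<lambda>e. \<Sum>i<5. lin_pow (L i) 3 e)" and nd: "\<not> hasdec F 4"
    and H: "(det3 (L 1) (L 2) (L 4) = 0) \<and> (det3 (L 2) (L 3) (L 4) = 0)"
  shows "\<exists>e. Hdet L e \<noteq> 0"
  by (rule coplanar[OF form Fd nd, of 2 4 1 3 0]) (use H det3_cyc[where x="L 1" and y="L 2" and z="L 4"] det3_swap23[where x="L 2" and y="L 3" and z="L 4"] in simp_all)

lemma cs_3401:
  fixes L :: "nat \<Rightarrow> vec3"
  assumes form: "is_form 3 F" and Fd: "F = (\<lambda>e. \<Sum>i<5. lin_pow (L i) 3 e)" and nd: "\<not> hasdec F 4"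
    and H: "(det3 (L 0) (L 3) (L 4) = 0) \<and> (det3 (L 1) (L 3) (L 4) = 0)"
  shows "\<exists>e. Hdet L e \<noteq> 0"
  by (rule coplanar[OF form Fd nd, of 3 4 0 1 2]) (use H det3_cyc[where x="L 0" and y="L 3" and z="L 4"] det3_cyc[where x="L 1" and y="L 3" and z="L 4"] in simp_all)

lemma cs_3402:
  fixes L :: "nat \<Rightarrow> vec3"
  assumes form: "is_form 3 F" and Fd: "F = (\<lambda>e. \<Sum>i<5. lin_pow (L i) 3 e)" and nd: "\<not> hasdec F 4"
    and H: "(det3 (L 0) (L 3) (L 4) = 0) \<and> (det3 (L 2) (L 3) (L 4) = 0)"
  shows "\<exists>e. Hdet L e \<noteq> 0"
  by (rule coplanar[OF form Fd nd, of 3 4 0 2 1]) (use H det3_cyc[where x="L 0" and y="L 3" and z="L 4"] det3_cyc[where x="L 2" and y="L 3" and z="L 4"] in simp_all)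

lemma cs_3412:
  fixes L :: "nat \<Rightarrow> vec3"
  assumes form: "is_form 3 F" and Fd: "F = (\<lambda>e. \<Sum>i<5. lin_pow (L i) 3 e)" and nd: "\<not> hasdec F 4"
    and H: "(det3 (L 1) (L 3) (L 4) = 0) \<and> (det3 (L 2) (L 3) (L 4) = 0)"
  shows "\<exists>e. Hdet L e \<noteq> 0"
  by (rule coplanar[OF form Fd nd, of 3 4 1 2 0]) (use H det3_cyc[where x="L 1" and y="L 3" and z="L 4"] det3_cyc[where x="L 2" and y="L 3" and z="L 4"] in simp_all)

lemma hess_witness:
  fixes L :: "nat \<Rightarrow> vec3"
  assumes form: "is_form 3 F" and Fd: "F = (\<lambda>e. \<Sum>i<5. lin_pow (L i) 3 e)" and nd: "\<not> hasdec F 4"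
  shows "\<exists>e. Hdet L e \<noteq> 0"
  using taut5[where zabc = "(det3 (L 0) (L 1) (L 2) = 0)" and zabd = "(det3 (L 0) (L 1) (L 3) = 0)" and zabe = "(det3 (L 0) (L 1) (L 4) = 0)" and zacd = "(det3 (L 0) (L 2) (L 3) = 0)" and zace = "(det3 (L 0) (L 2) (L 4) = 0)" and zade = "(det3 (L 0) (L 3) (L 4) = 0)" and zbcd = "(det3 (L 1) (L 2) (L 3) = 0)" and zbce = "(det3 (L 1) (L 2) (L 4) = 0)" and zbde = "(det3 (L 1) (L 3) (L 4) = 0)" and zcde = "(det3 (L 2) (L 3) (L 4) = 0)"]
  apply (elim disjE)
  apply (rule cg_01[OF form Fd nd], assumption)
  apply (rule cg_02[OF form Fd nd], assumption)
  apply (rule cg_03[OF form Fd nd], assumption)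
  apply (rule cg_04[OF form Fd nd], assumption)
  apply (rule cg_12[OF form Fd nd], assumption)
  apply (rule cg_13[OF form Fd nd], assumption)
  apply (rule cg_14[OF form Fd nd], assumption)
  apply (rule cg_23[OF form Fd nd], assumption)
  apply (rule cg_24[OF form Fd nd], assumption)
  apply (rule cg_34[OF form Fd nd], assumption)
  apply (rule cs_0123[OF form Fd nd], assumption)
  apply (rule cs_0124[OF form Fd nd], assumption)
  apply (rule cs_0134[OF form Fd nd], assumption)
  apply (rule cs_0213[OF form Fd nd], assumption)
  apply (rule cs_0214[OF form Fd nd], assumption)
  apply (rule cs_0234[OF form Fd nd], assumption)
  apply (rule cs_0312[OF form Fd nd], assumption)
  apply (rule cs_0314[OF form Fd nd], assumption)
  apply (rule cs_0324[OF form Fd nd], assumption)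
  apply (rule cs_0412[OF form Fd nd], assumption)
  apply (rule cs_0413[OF form Fd nd], assumption)
  apply (rule cs_0423[OF form Fd nd], assumption)
  apply (rule cs_1203[OF form Fd nd], assumption)
  apply (rule cs_1204[OF form Fd nd], assumption)
  apply (rule cs_1234[OF form Fd nd], assumption)
  apply (rule cs_1302[OF form Fd nd], assumption)
  apply (rule cs_1304[OF form Fd nd], assumption)
  apply (rule cs_1324[OF form Fd nd], assumption)
  apply (rule cs_1402[OF form Fd nd], assumption)
  apply (rule cs_1403[OF form Fd nd], assumption)
  apply (rule cs_1423[OF form Fd nd], assumption)
  apply (rule cs_2301[OF form Fd nd], assumption)
  apply (rule cs_2304[OF form Fd nd], assumption)
  apply (rule cs_2314[OF form Fd nd], assumption)
  apply (rule cs_2401[OF form Fd nd], assumption)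
  apply (rule cs_2403[OF form Fd nd], assumption)
  apply (rule cs_2413[OF form Fd nd], assumption)
  apply (rule cs_3401[OF form Fd nd], assumption)
  apply (rule cs_3402[OF form Fd nd], assumption)
  apply (rule cs_3412[OF form Fd nd], assumption)
  done

lemma dot_comb_r: "lin_eval u (vadd (vsmult \<alpha> x) (vsmult \<beta> y)) = \<alpha> * lin_eval u x + \<beta> * lin_eval u y"
  by (cases u; cases x; cases y) (simp add: algebra_simps)

lemma TL_lin1: "TL L (vadd (vsmult a x) (vsmult b y)) u v = a * TL L x u v + b * TL L y u v"
  unfolding TL_def dot_comb_r by (simp add: sum_distrib_left sum.distrib algebra_simps)

lemma TL_zero1: "TL L (0,0,0) u v = 0"
  unfolding TL_def by (simp add: dot_zero_r)

definition det3p :: "(nat \<Rightarrow> nat \<Rightarrow> complex poly) \<Rightarrow> complex poly" where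
  "det3p m = m 0 0 * (m 1 1 * m 2 2 - m 1 2 * m 2 1) - m 0 1 * (m 1 0 * m 2 2 - m 1 2 * m 2 0)
     + m 0 2 * (m 1 0 * m 2 1 - m 1 1 * m 2 0)"

lemma poly_det3p: "poly (det3p m) t = det3m (\<lambda>i j. poly (m i j) t)"
  unfolding det3p_def det3m_def by simp

lemma e0_exists:
  assumes H: "Hdet L e \<noteq> 0"
  shows "\<exists>e0. TL L e0 e0 e0 \<noteq> 0 \<and> Hdet L e0 \<noteq> 0"
proof -
  define M where "M i j = TL L e (E i) (E j)" for i j
  define g where "g = (TL L e e (E 0), TL L e e (E 1), TL L e e (E 2))"
  obtain x0 x1 x2 where xe: "e = (x0,x1,x2)" by (cases e) auto
  have bM: "TL L e e y = bil M e y" for y unfolding M_def by (rule bilin_T)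
  have gj: "TL L e e (E 0) = x0 * M 0 0 + x1 * M 1 0 + x2 * M 2 0"
    "TL L e e (E 1) = x0 * M 0 1 + x1 * M 1 1 + x2 * M 2 1"
    "TL L e e (E 2) = x0 * M 0 2 + x1 * M 1 2 + x2 * M 2 2"
    unfolding bM unfolding xe bil_def E_def by simp_all
  have gnz: "g \<noteq> (0,0,0)"
  proof
    assume g0: "g = (0,0,0)"
    have eqs: "x0 * M 0 0 + x1 * M 1 0 + x2 * M 2 0 = 0" "x0 * M 0 1 + x1 * M 1 1 + x2 * M 2 1 = 0"
      "x0 * M 0 2 + x1 * M 1 2 + x2 * M 2 2 = 0" using g0 gj unfolding g_def by auto
    have "det3m M * x0 = 0" "det3m M * x1 = 0" "det3m M * x2 = 0"
      unfolding det3m_def using eqs by algebra+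
    moreover have "det3m M \<noteq> 0" using H unfolding Hdet_def M_def .
    ultimately have "e = (0,0,0)" unfolding xe by simp
    then have "det3m M = 0" unfolding M_def det3m_def by (simp add: TL_zero1)
    then show False using \<open>det3m M \<noteq> 0\<close> by simp
  qed
  define w where "w = vcnj g"
  have gw: "lin_eval g w \<noteq> 0" unfolding w_def by (rule dot_vcnj_nz[OF gnz])
  have Tew: "TL L e e w = lin_eval g w"
  proof -
    obtain y0 y1 y2 where ye: "w = (y0,y1,y2)" by (cases w) auto
    show ?thesis unfolding g_def gj unfolding bM unfolding ye xe bil_def by simp algebra
  qed
  define pf where "pf = [:TL L e e e, 3 * TL L e e w, 3 * TL L e w w, TL L w w w:]"
  define et where "et t = lc e w w 1 t 0" for t
  have pft: "poly pf t = TL L (et t) (et t) (et t)" for t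
    unfolding et_def TL_comb pf_def by (simp add: TL_sym algebra_simps power2_eq_square power3_eq_cube)
  have pfn: "pf \<noteq> 0"
  proof
    assume "pf = 0"
    then have "coeff pf 1 = 0" by simp
    then show False using gw Tew unfolding pf_def by simp
  qed
  define PM where "PM i j = [:TL L e (E i) (E j), TL L w (E i) (E j):]" for i j
  have Met: "TL L (et t) (E i) (E j) = poly (PM i j) t" for t i j
  proof -
    have "et t = vadd (vsmult 1 e) (vsmult t w)"
      unfolding et_def lc_def by (cases e; cases w) simp
    then show ?thesis unfolding PM_def by (simp add: TL_lin1)
  qed
  have pdet: "poly (det3p PM) t = Hdet L (et t)" for t
    unfolding poly_det3p Hdet_def Met ..
  have "poly (det3p PM) 0 = Hdet L e"
    unfolding pdet et_def by (simp add: lc_100)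
  then have pdn: "det3p PM \<noteq> 0" using H by auto
  have "pf * det3p PM \<noteq> 0" using pfn pdn by simp
  then have "finite {t. poly (pf * det3p PM) t = 0}" by (rule poly_roots_finite)
  then obtain t where t: "poly (pf * det3p PM) t \<noteq> 0"
    using infinite_UNIV_char_0[where 'a=complex] by (metis (mono_tags, lifting) ex_new_if_finite mem_Collect_eq)
  then have "TL L (et t) (et t) (et t) \<noteq> 0" "Hdet L (et t) \<noteq> 0" using pft pdet by auto
  then show ?thesis by blast
qed

theorem proposition4p4:
  fixes F :: "mono \<Rightarrow> complex"
  assumes "is_form 3 F"
    and "waring_rank 3 F = 5"
  shows "\<exists>l :: nat \<Rightarrow> vec3. star4_ok l \<and> apolar (star_config l) F"
proof -
  have h5: "hasdec F 5" and nd: "\<not> hasdec F 4" using rank5_facts[OF assms] by auto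
  obtain L :: "nat \<Rightarrow> vec3" where Fd: "F = (\<lambda>e. \<Sum>i<5. lin_pow (L i) 3 e)" using h5 unfolding hasdec_def by blast
  obtain e where "Hdet L e \<noteq> 0" using hess_witness[OF assms(1) Fd nd] by blast
  then obtain e0 where e0: "TL L e0 e0 e0 \<noteq> 0" "Hdet L e0 \<noteq> 0" using e0_exists by blast
  obtain v0 v1 v2 where v: "det3 v0 v1 v2 \<noteq> 0" "TL L v0 v1 v2 = 0" "TL L v0 v0 v1 + TL L v0 v1 v1 = 0"
     "TL L v0 v0 v2 + TL L v0 v2 v2 = 0" "TL L v1 v1 v2 + TL L v1 v2 v2 = 0"
    using good_exists[OF e0] by blast
  have "star4_ok (lsel v0 v1 v2)" by (rule star4_ok_lsel[OF v(1)])
  moreover have "apolar (star_config (lsel v0 v1 v2)) F" by (rule good_apolar[OF Fd v])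
  ultimately show ?thesis by blast
qed

end
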